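(* Let $(\mathcal{I},+,\times,0,1)$ be a commutative idempotent semiring and let $m,n\ge 1$ and $\alpha_1,\dots,\alpha_m,\beta_1,\dots,\beta_n\in\mathcal{I}$. Let $f=\prod_{i=1}^m(x+\alpha_i)=\sum_{k=0}^m a_k x^{m-k}$ and $g=\prod_{j=1}^n(x+\beta_j)=\sum_{k=0}^n b_k x^{n-k}$ in $\mathcal{I}[x]$, so that $a_0=b_0=1$, $a_k=\sum_{1\le i_1<\dots<i_k\le m}\alpha_{i_1}\cdots\alpha_{i_k}$ and $b_k=\sum_{1\le j_1<\dots<j_k\le n}\beta_{j_1}\cdots\beta_{j_k}$. Define the resultant $\mathbf{R}=\prod_{i=1}^m\prod_{j=1}^n(\alpha_i+\beta_j)\in\mathcal{I}$ and the Sylvester expression $\mathbf{S}=\operatorname{per}(M)=\sum_{\sigma\in \mathfrak{S}_{m+n}}\prod_{i=1}^{m+n}M_{i\sigma(i)}\in\mathcal{I}$, where $M$ is the $(m+n)\times(m+n)$ Sylvester matrix: for $1\le j\le n$, row $j$ of $M$ has entry $a_k$ in column $j+k$ ($0\le k\le m$) and $0$ elsewhere; for $1\le i\le m$, row $n+i$ has entry $b_k$ in column $i+k$ ($0\le k\le n$) and $0$ elsewhere. Then $\mathbf{R}=\mathbf{S}$.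
   Context: A commutative idempotent semiring is a set $\mathcal{I}$ with binary operations $+,\times$ and elements $0,1$ such that $+$ is commutative, associative, has identity $0$ and is idempotent ($a+a=a$); $\times$ is commutative, associative, has identity $1$, and $a\times 0=0$; and $(a+b)\times c=a\times c+b\times c$ for all $a,b,c$. *)

theory Defs
  imports "HOL-Combinatorics.Permutations"
begin

text \<open>Commutative idempotent semiring: commutative semiring with 1 (addition commutative,
associative, identity 0; multiplication commutative, associative, identity 1; 0 absorbing;
distributivity) plus idempotent addition. 0 \<noteq> 1 is NOT required.\<close>
class comm_idem_semiring = comm_semiring_0 + comm_monoid_mult +
  assumes add_idem: "a + a = a"

definition elem_sym :: "nat \<Rightarrow> (nat \<Rightarrow> 'a::comm_idem_semiring) \<Rightarrow> nat \<Rightarrow> 'a" where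
  "elem_sym m x k = (\<Sum>S\<in>{S. S \<subseteq> {1..m} \<and> card S = k}. \<Prod>i\<in>S. x i)"

definition sylvester :: "nat \<Rightarrow> nat \<Rightarrow> (nat \<Rightarrow> 'a::comm_idem_semiring) \<Rightarrow> (nat \<Rightarrow> 'a)
    \<Rightarrow> nat \<Rightarrow> nat \<Rightarrow> 'a" where
  "sylvester m n a b r c =
     (if 1 \<le> r \<and> r \<le> n then (if r \<le> c \<and> c \<le> r + m then a (c - r) else 0)
      else if n < r \<and> r \<le> n + m then
        (let i = r - n in if i \<le> c \<and> c \<le> i + n then b (c - i) else 0)
      else 0)"

definition per :: "nat \<Rightarrow> (nat \<Rightarrow> nat \<Rightarrow> 'a::comm_idem_semiring) \<Rightarrow> 'a" where
  "per N M = (\<Sum>\<sigma>\<in>{\<sigma>. \<sigma> permutes {1..N}}. \<Prod>i\<in>{1..N}. M i (\<sigma> i))"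

end

theory Submission
  imports Defs
begin


context comm_idem_semiring begin

definition ile :: "'a \<Rightarrow> 'a \<Rightarrow> bool" where "ile x y \<longleftrightarrow> x + y = y"

lemma ile_refl[simp]: "ile x x" by (simp add: ile_def add_idem)

lemma ile_antisym: "ile x y \<Longrightarrow> ile y x \<Longrightarrow> x = y"
  unfolding ile_def by (simp add: add.commute)

lemma ile_trans: "ile x y \<Longrightarrow> ile y z \<Longrightarrow> ile x z"
  unfolding ile_def
proof -
  assume a: "x + y = y" and b: "y + z = z"
  have "x + z = x + (y + z)" using b by simp
  also have "\<dots> = (x + y) + z" by (simp add: add.assoc)
  finally show "x + z = z" using a b by simp
qed

lemma ile_zero[simp]: "ile 0 x" by (simp add: ile_def)

lemma ile_add: "ile x y \<Longrightarrow> ile x' y' \<Longrightarrow> ile (x + x') (y + y')"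
  unfolding ile_def
proof -
  assume a: "x + y = y" and b: "x' + y' = y'"
  have "x + x' + (y + y') = (x + y) + (x' + y')" by (simp add: ac_simps)
  then show "x + x' + (y + y') = y + y'" using a b by simp
qed

lemma ile_addL: "ile x (x + y)"
  unfolding ile_def by (simp add: add.assoc[symmetric] add_idem)

lemma ile_addR: "ile y (x + y)"
  using ile_addL[of y x] by (simp add: add.commute)

lemma ile_multR: "ile x y \<Longrightarrow> ile (x * z) (y * z)"
  unfolding ile_def
proof -
  assume "x + y = y"
  then have "(x + y) * z = y * z" by simp
  then show "x * z + y * z = y * z" by (simp add: distrib_right)
qed

lemma ile_mult: "ile x y \<Longrightarrow> ile x' y' \<Longrightarrow> ile (x * x') (y * y')"
  using ile_multR[of x y x'] ile_multR[of x' y' y] ile_trans by (simp add: mult.commute)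

lemma ile_sum_member: "finite A \<Longrightarrow> i \<in> A \<Longrightarrow> ile (f i) (sum f A)"
proof -
  assume "finite A" "i \<in> A"
  then have "sum f A = f i + sum f (A - {i})" by (rule sum.remove)
  then show ?thesis using ile_addL[of "f i" "sum f (A - {i})"] by simp
qed

lemma ile_sum_bound: "(\<And>i. i \<in> A \<Longrightarrow> ile (f i) y) \<Longrightarrow> ile (sum f A) y"
proof (induction A rule: infinite_finite_induct)
  case (insert x F)
  then have "ile (f x + sum f F) (y + y)" by (intro ile_add) auto
  then show ?case using insert.hyps by (simp add: add_idem)
qed simp_all

lemma ile_sum_mono: "(\<And>i. i \<in> A \<Longrightarrow> ile (f i) (g i)) \<Longrightarrow> ile (sum f A) (sum g A)"
proof (induction A rule: infinite_finite_induct)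
  case (insert x F)
  then have "ile (f x + sum f F) (g x + sum g F)" by (intro ile_add) auto
  then show ?case using insert.hyps by simp
qed simp_all

lemma ile_prod_mono: "(\<And>i. i \<in> A \<Longrightarrow> ile (f i) (g i)) \<Longrightarrow> ile (prod f A) (prod g A)"
proof (induction A rule: infinite_finite_induct)
  case (insert x F)
  then have "ile (f x * prod f F) (g x * prod g F)" by (intro ile_mult) auto
  then show ?case using insert.hyps by simp
qed simp_all

lemma ile_trans_member: "finite A \<Longrightarrow> i \<in> A \<Longrightarrow> ile x (f i) \<Longrightarrow> ile x (sum f A)"
  by (rule ile_trans[OF _ ile_sum_member])

lemma prod_zero': "finite A \<Longrightarrow> a \<in> A \<Longrightarrow> f a = 0 \<Longrightarrow> prod f A = 0"
proof -
  assume "finite A" "a \<in> A" "f a = 0"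
  then have "prod f A = f a * prod f (A - {a})" by (intro prod.remove)
  then show ?thesis using \<open>f a = 0\<close> by simp
qed

lemma prod_add':
  assumes finite: "finite A"
  shows   "(\<Prod>x\<in>A. f1 x + f2 x) = (\<Sum>X\<in>Pow A. (\<Prod>x\<in>X. f1 x) * (\<Prod>x\<in>A-X. f2 x))"
  using assms
proof (induction A rule: finite_induct)
  case (insert x A)
  have "(\<Sum>X\<in>Pow (insert x A). (\<Prod>x\<in>X. f1 x) * (\<Prod>x\<in>insert x A-X. f2 x)) =
        (\<Sum>X\<in>Pow A. (\<Prod>x\<in>X. f1 x) * (\<Prod>x\<in>insert x A-X. f2 x)) +
        (\<Sum>X\<in>insert x ` (Pow A). (\<Prod>x\<in>X. f1 x) * (\<Prod>x\<in>insert x A-X. f2 x))"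
    unfolding Pow_insert by (rule sum.union_disjoint) (use insert.hyps in auto)
  also have "(\<Sum>X\<in>Pow A. (\<Prod>x\<in>X. f1 x) * (\<Prod>x\<in>insert x A-X. f2 x)) =
             (\<Sum>X\<in>Pow A. f2 x * (\<Prod>x\<in>X. f1 x) * (\<Prod>x\<in>A-X. f2 x))"
  proof (rule sum.cong)
    fix X assume X: "X \<in> Pow A"
    have "(\<Prod>x\<in>X. f1 x) * (\<Prod>x\<in>insert x (A-X). f2 x) = f2 x * (\<Prod>x\<in>X. f1 x) * (\<Prod>x\<in>A-X. f2 x)"
      by (subst prod.insert) (use insert.hyps finite_subset[of X A] X in \<open>auto simp: mult_ac\<close>)
    also have "insert x (A - X) = insert x A - X"
      using insert.hyps X by auto
    finally show "(\<Prod>x\<in>X. f1 x) * (\<Prod>x\<in>insert x A-X. f2 x) = f2 x * (\<Prod>x\<in>X. f1 x) * (\<Prod>x\<in>A-X. f2 x)" .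
  qed auto
  also have "(\<Sum>X\<in>insert x ` (Pow A). (\<Prod>x\<in>X. f1 x) * (\<Prod>x\<in>insert x A-X. f2 x)) =
             (\<Sum>X\<in>Pow A. (\<Prod>x\<in>insert x X. f1 x) * (\<Prod>x\<in>insert x A-insert x X. f2 x))"
    by (subst sum.reindex) (use insert.hyps in \<open>auto intro!: inj_onI simp: o_def\<close>)
  also have "(\<Sum>X\<in>Pow A. (\<Prod>x\<in>insert x X. f1 x) * (\<Prod>x\<in>insert x A-insert x X. f2 x)) =
             (\<Sum>X\<in>Pow A. f1 x * (\<Prod>x\<in>X. f1 x) * (\<Prod>x\<in>A-X. f2 x))"
  proof (rule sum.cong)
    fix X assume X: "X \<in> Pow A"
    show "(\<Prod>x\<in>insert x X. f1 x) * (\<Prod>x\<in>insert x A-insert x X. f2 x) =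
          f1 x * (\<Prod>x\<in>X. f1 x) * (\<Prod>x\<in>A-X. f2 x)"
      by (subst prod.insert) (use insert.hyps finite_subset[of X A] X in auto)
  qed auto
  also have "(\<Sum>X\<in>Pow A. f2 x * prod f1 X * prod f2 (A - X)) +
             (\<Sum>X\<in>Pow A. f1 x * prod f1 X * prod f2 (A - X)) =
             (f1 x + f2 x) * (\<Sum>X\<in>Pow A. prod f1 X * prod f2 (A - X))"
    by (simp add: algebra_simps flip: sum_distrib_left sum_distrib_right)
  finally show ?case
    by (subst (asm) insert.IH [symmetric]) (use insert.hyps in simp)
qed auto

end



lemma es_0: "elem_sym N \<gamma> 0 = 1"
proof -
  have "{S. S \<subseteq> {1..N} \<and> card S = 0} = {{}}"
    by (auto dest: finite_subset)
  then show ?thesis by (simp add: elem_sym_def)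
qed

lemma es_big: "N < x \<Longrightarrow> elem_sym N \<gamma> x = 0"
proof -
  assume "N < x"
  have "{S. S \<subseteq> {1..N} \<and> card S = x} = {}"
  proof (rule ccontr)
    assume "{S. S \<subseteq> {1..N} \<and> card S = x} \<noteq> {}"
    then obtain S where "S \<subseteq> {1..N}" "card S = x" by auto
    then have "x \<le> N" using card_mono[of "{1..N}" S] by simp
    then show False using \<open>N < x\<close> by simp
  qed
  then show ?thesis unfolding elem_sym_def by (simp only: sum.empty)
qed

lemma es_fin: "finite {S. S \<subseteq> {1..(N::nat)} \<and> card S = x}"
  by (rule finite_subset[of _ "Pow {1..N}"]) auto

lemma es_rec: "elem_sym (Suc N) \<gamma> x = elem_sym N \<gamma> x + (if 1 \<le> x then \<gamma> (Suc N) * elem_sym N \<gamma> (x - 1) else 0)"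
proof (cases "x = 0")
  case True
  then show ?thesis by (simp add: es_0)
next
  case False
  define A where "A = {S. S \<subseteq> {1..N} \<and> card S = x}"
  define B where "B = {S. S \<subseteq> {1..N} \<and> card S = x - 1}"
  have eq: "{S. S \<subseteq> {1..Suc N} \<and> card S = x} = A \<union> insert (Suc N) ` B"
  proof
    show "{S. S \<subseteq> {1..Suc N} \<and> card S = x} \<subseteq> A \<union> insert (Suc N) ` B"
    proof
      fix S assume S: "S \<in> {S. S \<subseteq> {1..Suc N} \<and> card S = x}"
      then have fS: "finite S" using finite_subset by auto
      show "S \<in> A \<union> insert (Suc N) ` B"
      proof (cases "Suc N \<in> S")
        case True
        have "S - {Suc N} \<subseteq> {1..N}" using S by auto
        moreover have "card (S - {Suc N}) = x - 1" using S True fS by simp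
        ultimately have "S - {Suc N} \<in> B" by (simp add: B_def)
        moreover have "S = insert (Suc N) (S - {Suc N})" using True by auto
        ultimately show ?thesis by blast
      next
        case False
        then have "S \<subseteq> {1..N}" using S by (auto simp: subset_iff le_Suc_eq)
        then show ?thesis using S by (simp add: A_def)
      qed
    qed
  next
    show "A \<union> insert (Suc N) ` B \<subseteq> {S. S \<subseteq> {1..Suc N} \<and> card S = x}"
    proof
      fix S assume "S \<in> A \<union> insert (Suc N) ` B"
      then show "S \<in> {S. S \<subseteq> {1..Suc N} \<and> card S = x}"
      proof
        assume "S \<in> A" then show ?thesis by (auto simp: A_def)
      next
        assume "S \<in> insert (Suc N) ` B"
        then obtain T where T: "T \<subseteq> {1..N}" "card T = x - 1" "S = insert (Suc N) T" by (auto simp: B_def)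
        have "finite T" using T(1) finite_subset by auto
        moreover have "Suc N \<notin> T" using T(1) by auto
        ultimately have "card S = x" using T False by simp
        then show ?thesis using T by auto
      qed
    qed
  qed
  have fA: "finite A" unfolding A_def by (rule es_fin)
  have fB: "finite B" unfolding B_def by (rule es_fin)
  have disj: "A \<inter> insert (Suc N) ` B = {}" by (auto simp: A_def)
  have inj: "inj_on (insert (Suc N)) B"
  proof (rule inj_onI)
    fix S T assume "S \<in> B" "T \<in> B" "insert (Suc N) S = insert (Suc N) T"
    moreover have "Suc N \<notin> S" "Suc N \<notin> T" using \<open>S \<in> B\<close> \<open>T \<in> B\<close> by (auto simp: B_def)
    ultimately show "S = T" by (metis insert_ident)
  qed
  have "elem_sym (Suc N) \<gamma> x = (\<Sum>S\<in>A. prod \<gamma> S) + (\<Sum>S\<in>insert (Suc N) ` B. prod \<gamma> S)"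
    unfolding elem_sym_def eq by (rule sum.union_disjoint[OF fA _ disj]) (use fB in simp)
  also have "(\<Sum>S\<in>insert (Suc N) ` B. prod \<gamma> S) = (\<Sum>S\<in>B. prod \<gamma> (insert (Suc N) S))"
    by (rule sum.reindex[OF inj, unfolded comp_def])
  also have "\<dots> = (\<Sum>S\<in>B. \<gamma> (Suc N) * prod \<gamma> S)"
  proof (rule sum.cong)
    fix S assume "S \<in> B"
    then have "finite S" "Suc N \<notin> S" using finite_subset by (auto simp: B_def)
    then show "prod \<gamma> (insert (Suc N) S) = \<gamma> (Suc N) * prod \<gamma> S" by simp
  qed simp
  also have "\<dots> = \<gamma> (Suc N) * elem_sym N \<gamma> (x - 1)"
    by (simp add: elem_sym_def B_def sum_distrib_left)
  finally show ?thesis using False by (simp add: elem_sym_def A_def)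
qed

lemma es_transfer:
  assumes "y < x"
  shows "ile (elem_sym N \<gamma> x * elem_sym N \<gamma> y) (elem_sym N \<gamma> (x - 1) * elem_sym N \<gamma> (y + 1))"
proof -
  define F where "F = (\<lambda>k. {S. S \<subseteq> {1..N} \<and> card S = k})"
  have fF: "\<And>k. finite (F k)" unfolding F_def by (rule es_fin)
  have es: "\<And>k. elem_sym N \<gamma> k = (\<Sum>S\<in>F k. prod \<gamma> S)" by (simp add: elem_sym_def F_def)
  show ?thesis
    unfolding es sum_product
  proof (rule ile_sum_bound, rule ile_sum_bound)
    fix A B assume A: "A \<in> F x" and B: "B \<in> F y"
    have fA: "finite A" and fB: "finite B" using A B finite_subset by (auto simp: F_def)
    have "\<not> A \<subseteq> B"
    proof
      assume "A \<subseteq> B"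
      then have "card A \<le> card B" using fB by (rule card_mono[rotated])
      then show False using A B assms by (simp add: F_def)
    qed
    then obtain t where t: "t \<in> A" "t \<notin> B" by auto
    have A1: "A - {t} \<in> F (x - 1)" using A t fA by (auto simp: F_def)
    have B1: "insert t B \<in> F (y + 1)" using A B t fB by (auto simp: F_def)
    have "prod \<gamma> A * prod \<gamma> B = prod \<gamma> (A - {t}) * prod \<gamma> (insert t B)"
      using t fA fB by (simp add: prod.remove[of A t] mult_ac)
    also have "ile \<dots> (\<Sum>i\<in>F (x - 1). \<Sum>j\<in>F (y + 1). prod \<gamma> i * prod \<gamma> j)"
      by (rule ile_trans_member[OF fF A1], rule ile_sum_member[OF fF B1])
    finally show "ile (prod \<gamma> A * prod \<gamma> B) (\<Sum>i\<in>F (x - 1). \<Sum>j\<in>F (y + 1). prod \<gamma> i * prod \<gamma> j)" .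
  qed
qed

lemma vieta: "(\<Prod>t\<in>{1..N}. z + \<gamma> t) = (\<Sum>l\<in>{0..N}. z ^ (N - l) * elem_sym N \<gamma> l)"
proof (induction N)
  case 0
  then show ?case by (simp add: es_0)
next
  case (Suc N)
  let ?e = "elem_sym N \<gamma>"
  have "(\<Sum>l\<in>{0..Suc N}. z ^ (Suc N - l) * elem_sym (Suc N) \<gamma> l)
      = (\<Sum>l\<in>{0..Suc N}. z ^ (Suc N - l) * ?e l) + (\<Sum>l\<in>{0..Suc N}. z ^ (Suc N - l) * (if 1 \<le> l then \<gamma> (Suc N) * ?e (l - 1) else 0))"
    by (simp add: es_rec distrib_left sum.distrib)
  also have "(\<Sum>l\<in>{0..Suc N}. z ^ (Suc N - l) * ?e l) = z * (\<Sum>l\<in>{0..N}. z ^ (N - l) * ?e l)"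
  proof -
    have "(\<Sum>l\<in>{0..Suc N}. z ^ (Suc N - l) * ?e l) = (\<Sum>l\<in>{0..N}. z ^ (Suc N - l) * ?e l)"
      by (simp add: sum.atLeast0_atMost_Suc es_big)
    also have "\<dots> = (\<Sum>l\<in>{0..N}. z * (z ^ (N - l) * ?e l))"
      by (rule sum.cong) (simp_all add: Suc_diff_le mult.assoc)
    finally show ?thesis by (simp add: sum_distrib_left)
  qed
  also have "(\<Sum>l\<in>{0..Suc N}. z ^ (Suc N - l) * (if 1 \<le> l then \<gamma> (Suc N) * ?e (l - 1) else 0))
      = (\<Sum>l\<in>{0..N}. z ^ (Suc N - Suc l) * (\<gamma> (Suc N) * ?e l))"
    by (subst sum.atLeast0_atMost_Suc_shift) simp
  also have "\<dots> = \<gamma> (Suc N) * (\<Sum>l\<in>{0..N}. z ^ (N - l) * ?e l)"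
    by (simp add: sum_distrib_left mult_ac)
  finally show ?case using Suc by (simp add: distrib_right mult.commute)
qed



definition ctransfer :: "(nat \<Rightarrow> 'a::comm_idem_semiring) \<Rightarrow> bool" where
  "ctransfer c \<longleftrightarrow> (\<forall>x y. y < x \<longrightarrow> ile (c x * c y) (c (x - 1) * c (y + 1)))"

lemma es_ctransfer: "ctransfer (elem_sym N \<gamma>)"
  unfolding ctransfer_def using es_transfer by blast

lemma ctr_half:
  assumes "ctransfer c"
  shows "d + d \<le> x - y \<Longrightarrow> ile (c x * c y) (c (x - d) * c (y + d))"
proof (induction d)
  case 0
  then show ?case by simp
next
  case (Suc d)
  then have IH: "ile (c x * c y) (c (x - d) * c (y + d))" by simp
  have "y + d < x - d" using Suc.prems by simp
  then have "ile (c (x - d) * c (y + d)) (c (x - d - 1) * c (y + d + 1))"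
    using assms unfolding ctransfer_def by blast
  moreover have "x - d - 1 = x - Suc d" "y + d + 1 = y + Suc d" by simp_all
  ultimately show ?case using IH ile_trans by metis
qed

lemma ctr_ext:
  assumes "ctransfer c" "d \<le> x - y"
  shows "ile (c x * c y) (c (x - d) * c (y + d))"
proof (cases "d + d \<le> x - y")
  case True
  then show ?thesis using ctr_half[OF assms(1)] by blast
next
  case False
  define d' where "d' = x - y - d"
  have "d' + d' \<le> x - y" using False assms(2) by (simp add: d'_def)
  then have "ile (c x * c y) (c (x - d') * c (y + d'))" using ctr_half[OF assms(1)] by blast
  moreover have "x - d' = y + d" "y + d' = x - d" using False assms(2) by (simp_all add: d'_def)
  ultimately show ?thesis by (simp add: mult.commute)
qed

lemma sortU:
  assumes ct: "ctransfer c"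
  shows "inj_on f {1..n} \<Longrightarrow> (\<forall>r\<in>{1..n}. r \<le> f r) \<Longrightarrow>
    \<exists>g. (\<forall>r\<in>{1..n}. r \<le> g r) \<and> (\<forall>r\<in>{1..n}. \<forall>s\<in>{1..n}. r < s \<longrightarrow> g r < g s) \<and>
        g ` {1..n} = f ` {1..n} \<and> ile (\<Prod>r\<in>{1..n}. c (f r - r)) (\<Prod>r\<in>{1..n}. c (g r - r))"
proof (induction n arbitrary: f)
  case 0
  then show ?case by auto
next
  case (Suc n)
  define I where "I = {1..Suc n}"
  define M where "M = Max (f ` I)"
  have fin: "finite (f ` I)" "f ` I \<noteq> {}" by (auto simp: I_def)
  have M_in: "M \<in> f ` I" unfolding M_def using Max_in[OF fin] .
  then obtain r0 where r0: "r0 \<in> I" "f r0 = M" by auto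
  have Mge: "\<And>r. r \<in> I \<Longrightarrow> f r \<le> M" unfolding M_def using fin by simp
  have injf: "inj_on f I" using Suc.prems(1) by (simp add: I_def)
  have fge: "\<And>r. r \<in> I \<Longrightarrow> r \<le> f r" using Suc.prems(2) by (simp add: I_def)
  have SnI: "Suc n \<in> I" by (simp add: I_def)
  define f1 where "f1 = (\<lambda>r. if r = r0 then f (Suc n) else if r = Suc n then M else f r)"
  have inj1: "inj_on f1 {1..n}"
  proof (rule inj_onI)
    fix r s assume rs: "r \<in> {1..n}" "s \<in> {1..n}" "f1 r = f1 s"
    have rI: "r \<in> I" "s \<in> I" using rs by (auto simp: I_def)
    show "r = s"
    proof (cases "r = r0"; cases "s = r0")
      assume "r = r0" "s = r0" then show ?thesis by simp
    next
      assume "r = r0" "s \<noteq> r0"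
      then have "f (Suc n) = f s" using rs by (simp add: f1_def)
      then have "Suc n = s" using injf SnI rI by (meson inj_onD)
      then show ?thesis using rs by simp
    next
      assume "r \<noteq> r0" "s = r0"
      then have "f (Suc n) = f r" using rs by (simp add: f1_def)
      then have "Suc n = r" using injf SnI rI by (meson inj_onD)
      then show ?thesis using rs by simp
    next
      assume "r \<noteq> r0" "s \<noteq> r0"
      then have "f r = f s" using rs by (simp add: f1_def)
      then show ?thesis using injf rI by (meson inj_onD)
    qed
  qed
  have ge1: "\<forall>r\<in>{1..n}. r \<le> f1 r"
  proof
    fix r assume r: "r \<in> {1..n}"
    then have "r \<in> I" by (simp add: I_def)
    show "r \<le> f1 r"
    proof (cases "r = r0")
      case True
      then show ?thesis using fge[OF SnI] r by (simp add: f1_def)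
    next
      case False
      then show ?thesis using fge[OF \<open>r \<in> I\<close>] r by (simp add: f1_def)
    qed
  qed
  from Suc.IH[OF inj1 ge1] obtain g0 where g0:
    "\<forall>r\<in>{1..n}. r \<le> g0 r" "\<forall>r\<in>{1..n}. \<forall>s\<in>{1..n}. r < s \<longrightarrow> g0 r < g0 s"
    "g0 ` {1..n} = f1 ` {1..n}" "ile (\<Prod>r\<in>{1..n}. c (f1 r - r)) (\<Prod>r\<in>{1..n}. c (g0 r - r))"
    by blast
  have img: "f1 ` {1..n} \<union> {M} = f ` I"
  proof
    show "f1 ` {1..n} \<union> {M} \<subseteq> f ` I"
      using M_in SnI by (auto simp: f1_def I_def)
  next
    show "f ` I \<subseteq> f1 ` {1..n} \<union> {M}"
    proof
      fix y assume "y \<in> f ` I"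
      then obtain r where r: "r \<in> I" "y = f r" by auto
      show "y \<in> f1 ` {1..n} \<union> {M}"
      proof (cases "r = r0")
        case True then show ?thesis using r r0 by simp
      next
        case False
        show ?thesis
        proof (cases "r = Suc n")
          case True
          then have "r0 \<in> {1..n}" using False r0(1) by (auto simp: I_def)
          moreover have "f1 r0 = y" using True r by (simp add: f1_def)
          ultimately show ?thesis by blast
        next
          case False2: False
          then have "r \<in> {1..n}" using r(1) by (auto simp: I_def)
          moreover have "f1 r = y" using False False2 r by (simp add: f1_def)
          ultimately show ?thesis by blast
        qed
      qed
    qed
  qed
  have Mnot: "M \<notin> f1 ` {1..n}"
  proof
    assume "M \<in> f1 ` {1..n}"
    then obtain r where r: "r \<in> {1..n}" "f1 r = M" by auto
    have rI: "r \<in> I" using r by (simp add: I_def)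
    show False
    proof (cases "r = r0")
      case True
      then have "f (Suc n) = f r0" using r r0 by (simp add: f1_def)
      then have "Suc n = r0" using injf SnI r0 by (meson inj_onD)
      then show False using True r by simp
    next
      case False
      then have "f r = f r0" using r r0 by (simp add: f1_def)
      then show False using injf rI r0 False by (meson inj_onD)
    qed
  qed
  have lessM: "\<And>r. r \<in> {1..n} \<Longrightarrow> g0 r < M"
  proof -
    fix r assume r: "r \<in> {1..n}"
    then have "g0 r \<in> f1 ` {1..n}" using g0(3) by blast
    then have "g0 r \<in> f ` I" "g0 r \<noteq> M" using img Mnot by auto
    then show "g0 r < M" using Mge by fastforce
  qed
  define g where "g = g0(Suc n := M)"
  have prodI: "\<And>h. (\<Prod>r\<in>{1..Suc n}. h r) = (\<Prod>r\<in>{1..n}. h r) * h (Suc n)"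
    by (simp add: prod.cl_ivl_Suc)
  have step1: "ile (\<Prod>r\<in>I. c (f r - r)) (\<Prod>r\<in>I. c (f1 r - r))"
  proof (cases "r0 = Suc n")
    case True
    have "(\<Prod>r\<in>I. c (f r - r)) = (\<Prod>r\<in>I. c (f1 r - r))"
      by (rule prod.cong) (use True r0 in \<open>auto simp: f1_def\<close>)
    then show ?thesis by simp
  next
    case False
    define J where "J = I - {r0} - {Suc n}"
    have finI: "finite I" by (simp add: I_def)
    have split: "\<And>h :: nat \<Rightarrow> 'a. (\<Prod>r\<in>I. h r) = h r0 * h (Suc n) * (\<Prod>r\<in>J. h r)"
    proof -
      fix h :: "nat \<Rightarrow> 'a"
      have "(\<Prod>r\<in>I. h r) = h r0 * (\<Prod>r\<in>I - {r0}. h r)" using finI r0(1) by (rule prod.remove)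
      also have "(\<Prod>r\<in>I - {r0}. h r) = h (Suc n) * (\<Prod>r\<in>J. h r)"
        unfolding J_def using finI SnI False by (intro prod.remove) auto
      finally show "(\<Prod>r\<in>I. h r) = h r0 * h (Suc n) * (\<Prod>r\<in>J. h r)" by (simp add: mult.assoc)
    qed
    have restJ: "(\<Prod>r\<in>J. c (f r - r)) = (\<Prod>r\<in>J. c (f1 r - r))"
      by (rule prod.cong) (auto simp: J_def f1_def)
    have r0le: "r0 \<le> n" using r0(1) False by (simp add: I_def)
    have fSn: "Suc n \<le> f (Suc n)" "f (Suc n) \<le> M" using fge[OF SnI] Mge[OF SnI] by auto
    have pair: "ile (c (M - r0) * c (f (Suc n) - Suc n)) (c (f (Suc n) - r0) * c (M - Suc n))"
    proof -
      have "ile (c (M - r0) * c (f (Suc n) - Suc n))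
               (c ((M - r0) - (Suc n - r0)) * c ((f (Suc n) - Suc n) + (Suc n - r0)))"
        by (rule ctr_ext[OF ct]) (use r0le fSn in linarith)
      moreover have "(M - r0) - (Suc n - r0) = M - Suc n" using r0le fSn by linarith
      moreover have "(f (Suc n) - Suc n) + (Suc n - r0) = f (Suc n) - r0" using r0le fSn by linarith
      ultimately show ?thesis by (simp add: mult.commute)
    qed
    have "f1 r0 = f (Suc n)" "f1 (Suc n) = M" using False by (simp_all add: f1_def)
    then show ?thesis
      unfolding split[of "\<lambda>r. c (f r - r)"] split[of "\<lambda>r. c (f1 r - r)"] restJ
      using pair r0(2) by (simp add: ile_multR)
  qed
  have step2: "ile (\<Prod>r\<in>I. c (f1 r - r)) (\<Prod>r\<in>I. c (g r - r))"
  proof -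
    have "f1 (Suc n) = M" using r0(2) by (simp add: f1_def)
    then have "(\<Prod>r\<in>I. c (f1 r - r)) = (\<Prod>r\<in>{1..n}. c (f1 r - r)) * c (M - Suc n)"
      unfolding I_def prodI by simp
    moreover have "(\<Prod>r\<in>I. c (g r - r)) = (\<Prod>r\<in>{1..n}. c (g0 r - r)) * c (M - Suc n)"
    proof -
      have "(\<Prod>r\<in>{1..n}. c (g r - r)) = (\<Prod>r\<in>{1..n}. c (g0 r - r))"
        by (rule prod.cong) (auto simp: g_def)
      then show ?thesis unfolding I_def prodI by (simp add: g_def)
    qed
    ultimately show ?thesis using g0(4) by (simp add: ile_multR)
  qed
  have "\<forall>r\<in>I. r \<le> g r"
  proof
    fix r assume "r \<in> I"
    then show "r \<le> g r"
      using g0(1) fge[OF SnI] Mge[OF SnI] by (cases "r = Suc n") (auto simp: g_def I_def)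
  qed
  moreover have "\<forall>r\<in>I. \<forall>s\<in>I. r < s \<longrightarrow> g r < g s"
  proof (intro ballI impI)
    fix r s assume rs: "r \<in> I" "s \<in> I" "r < s"
    then have "r \<in> {1..n}" by (auto simp: I_def)
    show "g r < g s"
    proof (cases "s = Suc n")
      case True
      then show ?thesis using lessM[OF \<open>r \<in> {1..n}\<close>] rs by (simp add: g_def)
    next
      case False
      then have "s \<in> {1..n}" using rs by (auto simp: I_def)
      then show ?thesis using g0(2) \<open>r \<in> {1..n}\<close> rs by (simp add: g_def)
    qed
  qed
  moreover have "g ` I = f ` I"
  proof -
    have "g ` I = g0 ` {1..n} \<union> {M}" by (auto simp: g_def I_def)
    then show ?thesis using g0(3) img by simp
  qed
  moreover have "ile (\<Prod>r\<in>I. c (f r - r)) (\<Prod>r\<in>I. c (g r - r))"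
    using step1 step2 ile_trans by blast
  ultimately show ?case unfolding I_def by blast
qed



definition smono :: "(nat \<Rightarrow> nat) \<Rightarrow> nat \<Rightarrow> bool" where
  "smono g n \<longleftrightarrow> (\<forall>r\<in>{1..n}. \<forall>s\<in>{1..n}. r < s \<longrightarrow> g r < g s)"

lemma smono_le: "smono g n \<Longrightarrow> r \<in> {1..n} \<Longrightarrow> s \<in> {1..n} \<Longrightarrow> g r < g s \<longleftrightarrow> r < s"
  unfolding smono_def by (metis less_asym' linorder_neqE_nat)

lemma smono_inj: "smono g n \<Longrightarrow> inj_on g {1..n}"
proof (rule inj_onI)
  fix r s assume "smono g n" "r \<in> {1..n}" "s \<in> {1..n}" "g r = g s"
  then have "\<not> r < s" "\<not> s < r" using smono_le[of g n r s] smono_le[of g n s r] by auto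
  then show "r = s" by simp
qed

lemma below_lt: "smono g n \<Longrightarrow> r \<in> {1..n} \<Longrightarrow> {x \<in> g ` {1..n}. x < g r} = g ` {1..r-1}"
proof (rule set_eqI)
  fix x assume sm: "smono g n" and r: "r \<in> {1..n}"
  show "x \<in> {x \<in> g ` {1..n}. x < g r} \<longleftrightarrow> x \<in> g ` {1..r-1}"
  proof
    assume "x \<in> {x \<in> g ` {1..n}. x < g r}"
    then obtain s where s: "s \<in> {1..n}" "x = g s" "g s < g r" by auto
    then have "s < r" using smono_le[OF sm s(1) r] by simp
    then have "s \<in> {1..r-1}" using s(1) by auto
    then show "x \<in> g ` {1..r-1}" using s by auto
  next
    assume "x \<in> g ` {1..r-1}"
    then obtain s where s: "s \<in> {1..r-1}" "x = g s" by auto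
    then have s1: "s \<in> {1..n}" "s < r" using r by auto
    then have "g s < g r" using smono_le[OF sm s1(1) r] by simp
    then show "x \<in> {x \<in> g ` {1..n}. x < g r}" using s s1 by auto
  qed
qed

lemma below_le: "smono g n \<Longrightarrow> r \<in> {1..n} \<Longrightarrow> {x \<in> g ` {1..n}. x \<le> g r} = g ` {1..r}"
proof (rule set_eqI)
  fix x assume sm: "smono g n" and r: "r \<in> {1..n}"
  show "x \<in> {x \<in> g ` {1..n}. x \<le> g r} \<longleftrightarrow> x \<in> g ` {1..r}"
  proof
    assume "x \<in> {x \<in> g ` {1..n}. x \<le> g r}"
    then obtain s where s: "s \<in> {1..n}" "x = g s" "g s \<le> g r" by auto
    then have "s \<le> r" using smono_le[OF sm r s(1)] by simp
    then have "s \<in> {1..r}" using s(1) by auto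
    then show "x \<in> g ` {1..r}" using s by auto
  next
    assume "x \<in> g ` {1..r}"
    then obtain s where s: "s \<in> {1..r}" "x = g s" by auto
    then have s1: "s \<in> {1..n}" "s \<le> r" using r by auto
    then have "g s \<le> g r" using smono_le[OF sm r s1(1)] by simp
    then show "x \<in> {x \<in> g ` {1..n}. x \<le> g r}" using s s1 by auto
  qed
qed

lemma card_below_lt: "smono g n \<Longrightarrow> r \<in> {1..n} \<Longrightarrow> card {x \<in> g ` {1..n}. x < g r} = r - 1"
proof -
  assume sm: "smono g n" and r: "r \<in> {1..n}"
  have "inj_on g {1..r-1}" using smono_inj[OF sm] by (rule inj_on_subset) (use r in auto)
  then show ?thesis using below_lt[OF sm r] by (simp add: card_image)
qed

lemma card_below_le: "smono g n \<Longrightarrow> r \<in> {1..n} \<Longrightarrow> card {x \<in> g ` {1..n}. x \<le> g r} = r"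
proof -
  assume sm: "smono g n" and r: "r \<in> {1..n}"
  have "inj_on g {1..r}" using smono_inj[OF sm] by (rule inj_on_subset) (use r in auto)
  then show ?thesis using below_le[OF sm r] by (simp add: card_image)
qed



definition lc :: "nat \<Rightarrow> (nat \<Rightarrow> nat) \<Rightarrow> nat \<Rightarrow> nat" where
  "lc n k i = card {r \<in> {1..n}. k r < i}"

definition termL :: "nat \<Rightarrow> nat \<Rightarrow> (nat \<Rightarrow> 'a::comm_idem_semiring) \<Rightarrow> (nat \<Rightarrow> 'a) \<Rightarrow> (nat \<Rightarrow> nat) \<Rightarrow> 'a" where
  "termL m n a b k = (\<Prod>r\<in>{1..n}. a (k r)) * (\<Prod>i\<in>{1..m}. b (lc n k i))"

definition Kall :: "nat \<Rightarrow> nat \<Rightarrow> (nat \<Rightarrow> nat) set" where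
  "Kall m n = {1..n} \<rightarrow>\<^sub>E {0..m}"

definition Kmono :: "nat \<Rightarrow> nat \<Rightarrow> (nat \<Rightarrow> nat) set" where
  "Kmono m n = {k \<in> Kall m n. \<forall>r\<in>{1..n}. \<forall>s\<in>{1..n}. r \<le> s \<longrightarrow> k r \<le> k s}"

definition Lall :: "nat \<Rightarrow> nat \<Rightarrow> (nat \<Rightarrow> 'a::comm_idem_semiring) \<Rightarrow> (nat \<Rightarrow> 'a) \<Rightarrow> 'a" where
  "Lall m n a b = (\<Sum>k\<in>Kall m n. termL m n a b k)"

definition Lmono :: "nat \<Rightarrow> nat \<Rightarrow> (nat \<Rightarrow> 'a::comm_idem_semiring) \<Rightarrow> (nat \<Rightarrow> 'a) \<Rightarrow> 'a" where
  "Lmono m n a b = (\<Sum>k\<in>Kmono m n. termL m n a b k)"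

lemma fin_Kall: "finite (Kall m n)"
  unfolding Kall_def by (rule finite_PiE) auto

lemma fin_Kmono: "finite (Kmono m n)"
  unfolding Kmono_def using fin_Kall by simp

lemma lc_le: "lc n k i \<le> n"
proof -
  have "card {r \<in> {1..n}. k r < i} \<le> card {1..n}" by (rule card_mono) auto
  then show ?thesis unfolding lc_def by simp
qed

lemma per_split:
  fixes h :: "nat \<Rightarrow> 'a::comm_monoid_mult" and m n :: nat
  shows "(\<Prod>i\<in>{1..m+n}. h i) = (\<Prod>r\<in>{1..n}. h r) * (\<Prod>i\<in>{1..m}. h (n + i))"
proof -
  have eq: "{1..m+n} = {1..n} \<union> (\<lambda>i. n + i) ` {1..m}"
  proof
    show "{1..m+n} \<subseteq> {1..n} \<union> (\<lambda>i. n + i) ` {1..m}"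
    proof
      fix x assume x: "x \<in> {1..m+n}"
      show "x \<in> {1..n} \<union> (\<lambda>i. n + i) ` {1..m}"
      proof (cases "x \<le> n")
        case False
        then have "x - n \<in> {1..m}" "x = n + (x - n)" using x by auto
        then show ?thesis by blast
      qed (use x in auto)
    qed
  qed auto
  have "(\<Prod>i\<in>{1..m+n}. h i) = (\<Prod>r\<in>{1..n}. h r) * (\<Prod>i\<in>(\<lambda>i. n + i) ` {1..m}. h i)"
    unfolding eq by (rule prod.union_disjoint) auto
  also have "(\<Prod>i\<in>(\<lambda>i. n + i) ` {1..m}. h i) = (\<Prod>i\<in>{1..m}. h (n + i))"
    by (subst prod.reindex) (auto simp: inj_on_def)
  finally show ?thesis .
qed

lemma syl_a: "r \<in> {1..n} \<Longrightarrow> sylvester m n a b r c = (if r \<le> c \<and> c \<le> r + m then a (c - r) else 0)"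
  by (simp add: sylvester_def)

lemma syl_b: "i \<in> {1..m} \<Longrightarrow> sylvester m n a b (n + i) c = (if i \<le> c \<and> c \<le> i + n then b (c - i) else 0)"
  by (simp add: sylvester_def Let_def)

lemma Lmono_le_per: "ile (Lmono m n a b) (per (m + n) (sylvester m n a b))"
  unfolding Lmono_def per_def
proof (rule ile_sum_bound)
  fix k assume kK: "k \<in> Kmono m n"
  then have kle: "\<And>r. r \<in> {1..n} \<Longrightarrow> k r \<le> m" and kmono: "\<And>r s. r \<in> {1..n} \<Longrightarrow> s \<in> {1..n} \<Longrightarrow> r \<le> s \<Longrightarrow> k r \<le> k s"
    by (auto simp: Kmono_def Kall_def PiE_iff)
  define \<sigma> where "\<sigma> = (\<lambda>x. if x \<in> {1..n} then x + k x else if x \<in> {n+1..n+m} then (x - n) + lc n k (x - n) else x)"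
  have lcmono: "\<And>i j. i \<le> j \<Longrightarrow> lc n k i \<le> lc n k j"
    unfolding lc_def by (rule card_mono) auto
  have mixed: "\<And>r i. r \<in> {1..n} \<Longrightarrow> i \<in> {1..m} \<Longrightarrow> r + k r \<noteq> i + lc n k i"
  proof
    fix r i assume r: "r \<in> {1..n}" and i: "i \<in> {1..m}" and eq: "r + k r = i + lc n k i"
    show False
    proof (cases "k r < i")
      case True
      have "{1..r} \<subseteq> {r' \<in> {1..n}. k r' < i}"
        using r True kmono[of _ r] by fastforce
      then have "r \<le> lc n k i" unfolding lc_def using card_mono[of "{r' \<in> {1..n}. k r' < i}" "{1..r}"] by simp
      then show False using eq True by linarith
    next
      case False
      have "{r' \<in> {1..n}. k r' < i} \<subseteq> {1..r-1}"
      proof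
        fix r' assume r': "r' \<in> {r' \<in> {1..n}. k r' < i}"
        have "\<not> r \<le> r'"
        proof
          assume "r \<le> r'" then have "k r \<le> k r'" using kmono r r' by auto
          then show False using r' False by auto
        qed
        then show "r' \<in> {1..r-1}" using r' by auto
      qed
      then have "lc n k i \<le> r - 1" unfolding lc_def using card_mono[of "{1..r-1}"] by fastforce
      then show False using eq False r by auto
    qed
  qed
  have inj: "inj_on \<sigma> {1..m+n}"
  proof (rule inj_onI)
    fix x y assume x: "x \<in> {1..m+n}" and y: "y \<in> {1..m+n}" and e: "\<sigma> x = \<sigma> y"
    show "x = y"
    proof (cases "x \<le> n"; cases "y \<le> n")
      assume "x \<le> n" "y \<le> n"
      then have xy: "x \<in> {1..n}" "y \<in> {1..n}" using x y by auto
      then have "x + k x = y + k y" using e by (simp add: \<sigma>_def)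
      moreover have "x < y \<Longrightarrow> x + k x < y + k y" using kmono[OF xy] by fastforce
      moreover have "y < x \<Longrightarrow> y + k y < x + k x" using kmono[OF xy(2) xy(1)] by fastforce
      ultimately show ?thesis using linorder_neqE_nat by fastforce
    next
      assume "\<not> x \<le> n" "\<not> y \<le> n"
      then have xy: "x \<in> {n+1..n+m}" "y \<in> {n+1..n+m}" using x y by auto
      then have "(x - n) + lc n k (x - n) = (y - n) + lc n k (y - n)" using e by (simp add: \<sigma>_def)
      moreover have "x < y \<Longrightarrow> (x - n) + lc n k (x - n) < (y - n) + lc n k (y - n)"
      proof -
        assume "x < y"
        then have "lc n k (x - n) \<le> lc n k (y - n)" using lcmono[of "x - n" "y - n"] by simp
        then show ?thesis using xy \<open>x < y\<close> by auto
      qed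
      moreover have "y < x \<Longrightarrow> (y - n) + lc n k (y - n) < (x - n) + lc n k (x - n)"
      proof -
        assume "y < x"
        then have "lc n k (y - n) \<le> lc n k (x - n)" using lcmono[of "y - n" "x - n"] by simp
        then show ?thesis using xy \<open>y < x\<close> by auto
      qed
      ultimately show ?thesis using linorder_neqE_nat by fastforce
    next
      assume "x \<le> n" "\<not> y \<le> n"
      then have xy: "x \<in> {1..n}" "y - n \<in> {1..m}" "y \<in> {n+1..n+m}" using x y by auto
      then have "x + k x = (y - n) + lc n k (y - n)" using e by (simp add: \<sigma>_def)
      then show ?thesis using mixed[OF xy(1,2)] by simp
    next
      assume "\<not> x \<le> n" "y \<le> n"
      then have xy: "y \<in> {1..n}" "x - n \<in> {1..m}" "x \<in> {n+1..n+m}" using x y by auto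
      then have "y + k y = (x - n) + lc n k (x - n)" using e by (simp add: \<sigma>_def)
      then show ?thesis using mixed[OF xy(1,2)] by simp
    qed
  qed
  have sub: "\<sigma> ` {1..m+n} \<subseteq> {1..m+n}"
  proof
    fix y assume "y \<in> \<sigma> ` {1..m+n}"
    then obtain x where x: "x \<in> {1..m+n}" "y = \<sigma> x" by auto
    show "y \<in> {1..m+n}"
    proof (cases "x \<le> n")
      case True
      then show ?thesis using x kle[of x] by (auto simp: \<sigma>_def)
    next
      case False
      then show ?thesis using x lc_le[of n k "x - n"] by (auto simp: \<sigma>_def)
    qed
  qed
  have perm: "\<sigma> permutes {1..m+n}"
  proof (rule bij_imp_permutes)
    show "bij_betw \<sigma> {1..m+n} {1..m+n}"
      unfolding bij_betw_def using inj endo_inj_surj[OF _ sub inj] by simp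
  next
    fix x assume "x \<notin> {1..m+n}" then show "\<sigma> x = x" by (auto simp: \<sigma>_def)
  qed
  have "(\<Prod>i\<in>{1..m+n}. sylvester m n a b i (\<sigma> i)) = termL m n a b k"
  proof -
    have "(\<Prod>r\<in>{1..n}. sylvester m n a b r (\<sigma> r)) = (\<Prod>r\<in>{1..n}. a (k r))"
    proof (rule prod.cong)
      fix r assume r: "r \<in> {1..n}"
      then show "sylvester m n a b r (\<sigma> r) = a (k r)" using kle[OF r] by (simp add: syl_a \<sigma>_def)
    qed simp
    moreover have "(\<Prod>i\<in>{1..m}. sylvester m n a b (n + i) (\<sigma> (n + i))) = (\<Prod>i\<in>{1..m}. b (lc n k i))"
    proof (rule prod.cong)
      fix i assume i: "i \<in> {1..m}"
      then show "sylvester m n a b (n + i) (\<sigma> (n + i)) = b (lc n k i)"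
        using lc_le[of n k i] by (simp add: syl_b \<sigma>_def)
    qed simp
    ultimately show ?thesis unfolding per_split[of _ m n] termL_def by simp
  qed
  moreover have "\<sigma> \<in> {\<sigma>. \<sigma> permutes {1..m + n}}" using perm by simp
  moreover have "finite {\<sigma>. \<sigma> permutes {1..m + n}}" by (rule finite_permutations) simp
  ultimately show "ile (termL m n a b k) (\<Sum>\<sigma>\<in>{\<sigma>. \<sigma> permutes {1..m + n}}. \<Prod>i = 1..m + n. sylvester m n a b i (\<sigma> i))"
    using ile_sum_member[of "{\<sigma>. \<sigma> permutes {1..m + n}}" \<sigma> "\<lambda>\<sigma>. \<Prod>i = 1..m + n. sylvester m n a b i (\<sigma> i)"]
    by simp
qed



declare ile_trans[trans]

lemma ivl_split: "{1..m+n} = {1..n} \<union> (\<lambda>i. n + i) ` {1..(m::nat)}"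
proof
  show "{1..m+n} \<subseteq> {1..n} \<union> (\<lambda>i. n + i) ` {1..m}"
  proof
    fix x assume x: "x \<in> {1..m+n}"
    show "x \<in> {1..n} \<union> (\<lambda>i. n + i) ` {1..m}"
    proof (cases "x \<le> n")
      case False
      then have "x - n \<in> {1..m}" "x = n + (x - n)" using x by auto
      then show ?thesis by blast
    qed (use x in auto)
  qed
qed auto

lemma count_split:
  assumes PQ: "P \<union> Q = {1..N}" and disj: "P \<inter> Q = {}" and x: "x \<in> {1..N}"
  shows "x - 1 = card {y \<in> P. y < x} + card {y \<in> Q. y < x}"
proof -
  have "{1..x-1} = {y \<in> P. y < x} \<union> {y \<in> Q. y < x}"
  proof
    show "{1..x-1} \<subseteq> {y \<in> P. y < x} \<union> {y \<in> Q. y < x}"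
    proof
      fix y assume "y \<in> {1..x-1}"
      then have "y \<in> {1..N}" "y < x" using x by auto
      then show "y \<in> {y \<in> P. y < x} \<union> {y \<in> Q. y < x}" using PQ by auto
    qed
  next
    show "{y \<in> P. y < x} \<union> {y \<in> Q. y < x} \<subseteq> {1..x-1}"
    proof
      fix y assume "y \<in> {y \<in> P. y < x} \<union> {y \<in> Q. y < x}"
      then have "y \<in> {1..N}" "y < x" using PQ by auto
      then show "y \<in> {1..x-1}" by auto
    qed
  qed
  moreover have "finite {y \<in> P. y < x}" "finite {y \<in> Q. y < x}" by auto
  moreover have "{y \<in> P. y < x} \<inter> {y \<in> Q. y < x} = {}" using disj by auto
  ultimately have "card {1..x-1} = card {y \<in> P. y < x} + card {y \<in> Q. y < x}"
    by (simp add: card_Un_disjoint)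
  then show ?thesis by simp
qed

lemma per_le_Lall:
  assumes cta: "ctransfer a" and ctb: "ctransfer b"
  shows "ile (per (m + n) (sylvester m n a b)) (Lall m n a b)"
  unfolding per_def
proof (rule ile_sum_bound)
  fix \<sigma> assume "\<sigma> \<in> {\<sigma>. \<sigma> permutes {1..m + n}}"
  then have perm: "\<sigma> permutes {1..m+n}" by simp
  have injs: "inj \<sigma>" using perm by (rule permutes_inj)
  let ?S = "sylvester m n a b"
  have split: "(\<Prod>i\<in>{1..m+n}. ?S i (\<sigma> i)) = (\<Prod>r\<in>{1..n}. ?S r (\<sigma> r)) * (\<Prod>i\<in>{1..m}. ?S (n + i) (\<sigma> (n + i)))"
    by (rule per_split)
  show "ile (\<Prod>i = 1..m + n. ?S i (\<sigma> i)) (Lall m n a b)"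
  proof (cases "(\<forall>r\<in>{1..n}. r \<le> \<sigma> r \<and> \<sigma> r \<le> r + m) \<and> (\<forall>i\<in>{1..m}. i \<le> \<sigma> (n+i) \<and> \<sigma> (n+i) \<le> i + n)")
    case False
    have "(\<Prod>i\<in>{1..m+n}. ?S i (\<sigma> i)) = 0"
    proof (cases "\<forall>r\<in>{1..n}. r \<le> \<sigma> r \<and> \<sigma> r \<le> r + m")
      case False
      then obtain r where "r \<in> {1..n}" "\<not> (r \<le> \<sigma> r \<and> \<sigma> r \<le> r + m)" by blast
      then have "(\<Prod>r\<in>{1..n}. ?S r (\<sigma> r)) = 0" by (intro prod_zero') (auto simp: syl_a)
      then show "(\<Prod>i\<in>{1..m+n}. ?S i (\<sigma> i)) = 0" using split by simp
    next
      case True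
      then have "\<not> (\<forall>i\<in>{1..m}. i \<le> \<sigma> (n+i) \<and> \<sigma> (n+i) \<le> i + n)" using False by blast
      then obtain i where "i \<in> {1..m}" "\<not> (i \<le> \<sigma> (n+i) \<and> \<sigma> (n+i) \<le> i + n)" by blast
      then have "(\<Prod>i\<in>{1..m}. ?S (n + i) (\<sigma> (n + i))) = 0" by (intro prod_zero') (auto simp: syl_b)
      then show "(\<Prod>i\<in>{1..m+n}. ?S i (\<sigma> i)) = 0" using split by simp
    qed
    then show ?thesis by simp
  next
    case True
    then have va: "\<And>r. r \<in> {1..n} \<Longrightarrow> r \<le> \<sigma> r \<and> \<sigma> r \<le> r + m"
      and vb: "\<And>i. i \<in> {1..m} \<Longrightarrow> i \<le> \<sigma> (n+i) \<and> \<sigma> (n+i) \<le> i + n" by auto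
    have A: "(\<Prod>r\<in>{1..n}. ?S r (\<sigma> r)) = (\<Prod>r\<in>{1..n}. a (\<sigma> r - r))"
      by (rule prod.cong) (use va in \<open>auto simp: syl_a\<close>)
    have B: "(\<Prod>i\<in>{1..m}. ?S (n + i) (\<sigma> (n + i))) = (\<Prod>i\<in>{1..m}. b (\<sigma> (n + i) - i))"
      by (rule prod.cong) (use vb in \<open>auto simp: syl_b\<close>)
    have inja: "inj_on \<sigma> {1..n}" using injs by (rule inj_on_subset) simp
    have injb: "inj_on (\<lambda>i. \<sigma> (n + i)) {1..m}"
    proof (rule inj_onI)
      fix x y assume "\<sigma> (n + x) = \<sigma> (n + y)"
      then have "n + x = n + y" using injs injD by metis
      then show "x = y" by simp
    qed
    obtain ga where ga: "\<forall>r\<in>{1..n}. r \<le> ga r" "\<forall>r\<in>{1..n}. \<forall>s\<in>{1..n}. r < s \<longrightarrow> ga r < ga s"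
      "ga ` {1..n} = \<sigma> ` {1..n}" "ile (\<Prod>r\<in>{1..n}. a (\<sigma> r - r)) (\<Prod>r\<in>{1..n}. a (ga r - r))"
    proof -
      have "\<forall>r\<in>{1..n}. r \<le> \<sigma> r" using va by blast
      from sortU[OF cta inja this] show ?thesis by (elim exE conjE) (rule that)
    qed
    obtain gb where gb: "\<forall>i\<in>{1..m}. i \<le> gb i" "\<forall>r\<in>{1..m}. \<forall>s\<in>{1..m}. r < s \<longrightarrow> gb r < gb s"
      "gb ` {1..m} = (\<lambda>i. \<sigma> (n + i)) ` {1..m}" "ile (\<Prod>i\<in>{1..m}. b (\<sigma> (n + i) - i)) (\<Prod>i\<in>{1..m}. b (gb i - i))"
    proof -
      have "\<forall>i\<in>{1..m}. i \<le> \<sigma> (n + i)" using vb by blast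
      from sortU[OF ctb injb this] show ?thesis by (elim exE conjE) (rule that)
    qed
    have sma: "smono ga n" using ga(2) by (simp add: smono_def)
    have smb: "smono gb m" using gb(2) by (simp add: smono_def)
    define P where "P = ga ` {1..n}"
    define Q where "Q = gb ` {1..m}"
    have PQ: "P \<union> Q = {1..m+n}"
    proof -
      have "\<sigma> ` {1..m+n} = {1..m+n}" using perm by (rule permutes_image)
      moreover have "\<sigma> ` {1..m+n} = \<sigma> ` {1..n} \<union> (\<lambda>i. \<sigma> (n + i)) ` {1..m}"
        by (simp only: ivl_split[of m n] image_Un image_image)
      ultimately show ?thesis unfolding P_def Q_def ga(3) gb(3) by simp
    qed
    have disj: "P \<inter> Q = {}"
    proof (rule equals0I)
      fix y assume "y \<in> P \<inter> Q"
      then obtain r i where ri: "r \<in> {1..n}" "i \<in> {1..m}" "y = \<sigma> r" "y = \<sigma> (n+i)"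
        unfolding P_def Q_def ga(3) gb(3) by blast
      then have "r = n + i" using injs injD by metis
      then show False using ri by simp
    qed
    have cardQ: "card Q = m" unfolding Q_def using smono_inj[OF smb] by (simp add: card_image)
    have Pin: "\<And>r. r \<in> {1..n} \<Longrightarrow> ga r \<in> {1..m+n}" using PQ by (auto simp: P_def)
    have Qin: "\<And>i. i \<in> {1..m} \<Longrightarrow> gb i \<in> {1..m+n}" using PQ by (auto simp: Q_def)
    have kQ: "\<And>r. r \<in> {1..n} \<Longrightarrow> ga r - r = card {y \<in> Q. y < ga r}"
    proof -
      fix r assume r: "r \<in> {1..n}"
      have "ga r - 1 = card {y \<in> P. y < ga r} + card {y \<in> Q. y < ga r}"
        by (rule count_split[OF PQ disj Pin[OF r]])
      moreover have "card {y \<in> P. y < ga r} = r - 1" unfolding P_def by (rule card_below_lt[OF sma r])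
      ultimately show "ga r - r = card {y \<in> Q. y < ga r}" using r ga(1) by auto
    qed
    have lP: "\<And>i. i \<in> {1..m} \<Longrightarrow> gb i - i = card {y \<in> P. y < gb i}"
    proof -
      fix i assume i: "i \<in> {1..m}"
      have "gb i - 1 = card {y \<in> P. y < gb i} + card {y \<in> Q. y < gb i}"
        by (rule count_split[OF PQ disj Qin[OF i]])
      moreover have "card {y \<in> Q. y < gb i} = i - 1" unfolding Q_def by (rule card_below_lt[OF smb i])
      ultimately show "gb i - i = card {y \<in> P. y < gb i}" using i gb(1) by auto
    qed
    define k where "k = restrict (\<lambda>r. ga r - r) {1..n}"
    have kK: "k \<in> Kall m n"
    proof -
      have "\<forall>r\<in>{1..n}. k r \<in> {0..m}"
      proof
        fix r assume r: "r \<in> {1..n}"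
        have "card {y \<in> Q. y < ga r} \<le> card Q" by (rule card_mono) (auto simp: Q_def)
        then show "k r \<in> {0..m}" using kQ[OF r] cardQ r by (simp add: k_def)
      qed
      then show ?thesis unfolding Kall_def k_def by (simp add: PiE_iff)
    qed
    have lck: "\<And>i. i \<in> {1..m} \<Longrightarrow> gb i - i = lc n k i"
    proof -
      fix i assume i: "i \<in> {1..m}"
      have eq1: "{y \<in> P. y < gb i} = ga ` {r \<in> {1..n}. ga r < gb i}" unfolding P_def by auto
      have "inj_on ga {r \<in> {1..n}. ga r < gb i}" using smono_inj[OF sma] by (rule inj_on_subset) auto
      then have c1: "card {y \<in> P. y < gb i} = card {r \<in> {1..n}. ga r < gb i}" unfolding eq1 by (rule card_image)
      have "{r \<in> {1..n}. ga r < gb i} = {r \<in> {1..n}. k r < i}"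
      proof (rule Collect_cong, rule conj_cong[OF refl])
        fix r assume r: "r \<in> {1..n}"
        show "ga r < gb i \<longleftrightarrow> k r < i"
        proof
          assume lt: "ga r < gb i"
          have "card {y \<in> Q. y < ga r} \<le> card {y \<in> Q. y < gb i}"
            by (rule card_mono) (use lt in \<open>auto simp: Q_def\<close>)
          moreover have "card {y \<in> Q. y < gb i} = i - 1" unfolding Q_def by (rule card_below_lt[OF smb i])
          ultimately have "card {y \<in> Q. y < ga r} < i" using i by auto
          then show "k r < i" using kQ[OF r] r by (simp add: k_def)
        next
          assume kr: "k r < i"
          show "ga r < gb i"
          proof (rule ccontr)
            assume "\<not> ga r < gb i"
            moreover have "ga r \<noteq> gb i"
            proof
              assume "ga r = gb i"
              then have "ga r \<in> P \<inter> Q" using r i unfolding P_def Q_def by (metis IntI image_eqI)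
              then show False using disj by simp
            qed
            ultimately have gt: "gb i < ga r" by simp
            have "card {y \<in> Q. y \<le> gb i} \<le> card {y \<in> Q. y < ga r}"
              by (rule card_mono) (use gt in \<open>auto simp: Q_def\<close>)
            moreover have "card {y \<in> Q. y \<le> gb i} = i" unfolding Q_def by (rule card_below_le[OF smb i])
            ultimately show False using kQ[OF r] kr r by (simp add: k_def)
          qed
        qed
      qed
      then show "gb i - i = lc n k i" using lP[OF i] c1 by (simp add: lc_def)
    qed
    have "ile (\<Prod>i\<in>{1..m+n}. ?S i (\<sigma> i)) ((\<Prod>r\<in>{1..n}. a (ga r - r)) * (\<Prod>i\<in>{1..m}. b (gb i - i)))"
      unfolding split A B by (rule ile_mult[OF ga(4) gb(4)])
    also have "(\<Prod>r\<in>{1..n}. a (ga r - r)) * (\<Prod>i\<in>{1..m}. b (gb i - i)) = termL m n a b k"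
    proof -
      have "(\<Prod>r\<in>{1..n}. a (ga r - r)) = (\<Prod>r\<in>{1..n}. a (k r))" by (rule prod.cong) (auto simp: k_def)
      moreover have "(\<Prod>i\<in>{1..m}. b (gb i - i)) = (\<Prod>i\<in>{1..m}. b (lc n k i))" by (rule prod.cong) (auto simp: lck)
      ultimately show ?thesis by (simp add: termL_def)
    qed
    also have "ile (termL m n a b k) (Lall m n a b)"
      unfolding Lall_def by (rule ile_sum_member[OF fin_Kall kK])
    finally show ?thesis .
  qed
qed



lemma top_set:
  fixes k :: "nat \<Rightarrow> nat"
  assumes "finite A"
  shows "w \<le> card A \<Longrightarrow> \<exists>T. T \<subseteq> A \<and> card T = w \<and> (\<forall>r\<in>T. \<forall>r'\<in>A - T. k r' \<le> k r)"
proof (induction w)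
  case 0
  then show ?case by (intro exI[of _ "{}"]) simp
next
  case (Suc w)
  then obtain T where T: "T \<subseteq> A" "card T = w" "\<forall>r\<in>T. \<forall>r'\<in>A - T. k r' \<le> k r" by auto
  have fT: "finite T" using T(1) assms finite_subset by auto
  have "A - T \<noteq> {}"
  proof
    assume "A - T = {}"
    then have "A \<subseteq> T" by auto
    then have "card A \<le> card T" using fT by (rule card_mono[rotated])
    then show False using Suc.prems T(2) by simp
  qed
  moreover have fAT: "finite (A - T)" using assms by simp
  ultimately have "Max (k ` (A - T)) \<in> k ` (A - T)" by simp
  then obtain r0 where r0: "r0 \<in> A - T" "k r0 = Max (k ` (A - T))" by auto
  have r0max: "\<forall>r'\<in>A - T. k r' \<le> k r0" using r0(2) fAT by simp
  define T' where "T' = insert r0 T"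
  have "T' \<subseteq> A" using T(1) r0(1) by (auto simp: T'_def)
  moreover have "card T' = Suc w" using r0(1) fT T(2) by (simp add: T'_def)
  moreover have "\<forall>r\<in>T'. \<forall>r'\<in>A - T'. k r' \<le> k r"
  proof (intro ballI)
    fix r r' assume r: "r \<in> T'" and r': "r' \<in> A - T'"
    show "k r' \<le> k r"
    proof (cases "r = r0")
      case True then show ?thesis using r0max r' by (auto simp: T'_def)
    next
      case False
      then have "r \<in> T" using r by (simp add: T'_def)
      then show ?thesis using T(3) r' by (auto simp: T'_def)
    qed
  qed
  ultimately show ?case by blast
qed

definition PW :: "(nat \<Rightarrow> 'a::comm_idem_semiring) \<Rightarrow> (nat \<Rightarrow> 'a) \<Rightarrow> nat set \<Rightarrow> nat set \<Rightarrow> 'a" where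
  "PW h0 h1 A W = (\<Prod>r\<in>W. h1 r) * (\<Prod>r\<in>A - W. h0 r)"

lemma exchange:
  fixes k :: "nat \<Rightarrow> nat" and h0 h1 :: "nat \<Rightarrow> 'a::comm_idem_semiring"
  assumes fA: "finite A"
    and ex: "\<And>r r'. r \<in> A \<Longrightarrow> r' \<in> A \<Longrightarrow> k r \<le> k r' \<Longrightarrow> ile (h1 r * h0 r') (h0 r * h1 r')"
    and TA: "T \<subseteq> A" and top: "\<forall>r\<in>T. \<forall>r'\<in>A - T. k r' \<le> k r"
  shows "W \<subseteq> A \<Longrightarrow> card W = card T \<Longrightarrow> ile (PW h0 h1 A W) (PW h0 h1 A T)"
proof (induction "card (W - T)" arbitrary: W rule: less_induct)
  case less
  have fW: "finite W" using less.prems(1) fA finite_subset by auto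
  have fT: "finite T" using TA fA finite_subset by auto
  show ?case
  proof (cases "W - T = {}")
    case True
    then have "W \<subseteq> T" by auto
    then have "W = T" using card_subset_eq[OF fT] less.prems(2) by auto
    then show ?thesis by simp
  next
    case False
    then obtain r where r: "r \<in> W" "r \<notin> T" by auto
    have "card (W - T) = card (T - W)"
    proof -
      have e1: "W = (W - T) \<union> (W \<inter> T)" by auto
      have "card ((W - T) \<union> (W \<inter> T)) = card (W - T) + card (W \<inter> T)"
        by (rule card_Un_disjoint) (use fW in auto)
      then have c1: "card W = card (W - T) + card (W \<inter> T)" using e1 by simp
      have e2: "T = (T - W) \<union> (W \<inter> T)" by auto
      have "card ((T - W) \<union> (W \<inter> T)) = card (T - W) + card (W \<inter> T)"
        by (rule card_Un_disjoint) (use fT in auto)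
      then have c2: "card T = card (T - W) + card (W \<inter> T)" using e2 by simp
      show ?thesis using c1 c2 less.prems(2) by simp
    qed
    moreover have "card (W - T) > 0" using False fW by (simp add: card_gt_0_iff)
    ultimately have "T - W \<noteq> {}" by (metis card.empty less_irrefl)
    then obtain r' where r': "r' \<in> T" "r' \<notin> W" by auto
    have rA: "r \<in> A" "r' \<in> A" using r r' less.prems(1) TA by auto
    have kle: "k r \<le> k r'" using top r' r rA by auto
    define W2 where "W2 = insert r' (W - {r})"
    have W2A: "W2 \<subseteq> A" using less.prems(1) rA by (auto simp: W2_def)
    have "card W > 0" using r fW by (auto simp: card_gt_0_iff)
    then have cW2: "card W2 = card T" using less.prems(2) r r' fW by (simp add: W2_def card_Diff_singleton)
    have lt: "card (W2 - T) < card (W - T)"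
    proof -
      have "W2 - T = (W - T) - {r}" using r' by (auto simp: W2_def)
      moreover have "card ((W - T) - {r}) < card (W - T)"
        by (rule card_Diff1_less) (use fW r in auto)
      ultimately show ?thesis by simp
    qed
    have IH: "ile (PW h0 h1 A W2) (PW h0 h1 A T)" using less.hyps[OF lt W2A cW2] .
    define X where "X = (\<Prod>s\<in>W - {r}. h1 s)"
    define Y where "Y = (\<Prod>s\<in>A - W - {r'}. h0 s)"
    have fAW: "finite (A - W)" using fA by simp
    have "PW h0 h1 A W = (h1 r * X) * (h0 r' * Y)"
      unfolding PW_def X_def Y_def
      using prod.remove[OF fW r(1), of h1] prod.remove[OF fAW, of r' h0] r' rA by simp
    moreover have "PW h0 h1 A W2 = (h1 r' * X) * (h0 r * Y)"
    proof -
      have "(\<Prod>s\<in>W2. h1 s) = h1 r' * X" unfolding W2_def X_def using fW r' by simp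
      moreover have "A - W2 = insert r (A - W - {r'})" using rA r r' less.prems(1) by (auto simp: W2_def)
      moreover have "r \<notin> A - W - {r'}" using r by simp
      ultimately show ?thesis unfolding PW_def Y_def using fA by simp
    qed
    moreover have "ile ((h1 r * X) * (h0 r' * Y)) ((h1 r' * X) * (h0 r * Y))"
    proof -
      have "ile ((h1 r * h0 r') * (X * Y)) ((h0 r * h1 r') * (X * Y))"
        using ex[OF rA kle] by (rule ile_multR)
      then show ?thesis by (simp add: mult_ac)
    qed
    ultimately have "ile (PW h0 h1 A W) (PW h0 h1 A W2)" by simp
    then show ?thesis using IH by (rule ile_trans)
  qed
qed

lemma prod_split3:
  fixes f :: "nat \<Rightarrow> 'a::comm_monoid_mult"
  assumes "j \<le> M"
  shows "(\<Prod>i\<in>{1..Suc M}. f i) = (\<Prod>i\<in>{1..j}. f i) * f (Suc j) * (\<Prod>i\<in>{Suc j..M}. f (Suc i))"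
proof -
  have "{1..Suc M} = {1..j} \<union> {Suc j..Suc M}" using assms by auto
  then have "(\<Prod>i\<in>{1..Suc M}. f i) = (\<Prod>i\<in>{1..j}. f i) * (\<Prod>i\<in>{Suc j..Suc M}. f i)"
    by (simp add: prod.union_disjoint ivl_disj_int)
  also have "{Suc j..Suc M} = insert (Suc j) {Suc (Suc j)..Suc M}" using assms by auto
  also have "(\<Prod>i\<in>insert (Suc j) {Suc (Suc j)..Suc M}. f i) = f (Suc j) * (\<Prod>i\<in>{Suc (Suc j)..Suc M}. f i)"
    by simp
  also have "(\<Prod>i\<in>{Suc (Suc j)..Suc M}. f i) = (\<Prod>i\<in>{Suc j..M}. f (Suc i))"
    by (rule prod.shift_bounds_cl_Suc_ivl)
  finally show ?thesis by (simp add: mult.assoc)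
qed

lemma prod_split2:
  fixes f :: "nat \<Rightarrow> 'a::comm_monoid_mult"
  assumes "j \<le> M"
  shows "(\<Prod>i\<in>{1..M}. f i) = (\<Prod>i\<in>{1..j}. f i) * (\<Prod>i\<in>{Suc j..M}. f i)"
proof -
  have "{1..M} = {1..j} \<union> {Suc j..M}" using assms by auto
  then show ?thesis by (simp add: prod.union_disjoint ivl_disj_int)
qed



definition gpoly :: "nat \<Rightarrow> (nat \<Rightarrow> 'a::comm_idem_semiring) \<Rightarrow> 'a \<Rightarrow> 'a" where
  "gpoly n \<beta> x = (\<Sum>l\<in>{0..n}. x ^ (n - l) * elem_sym n \<beta> l)"

lemma prod_if_pow:
  fixes x :: "'a::comm_monoid_mult"
  assumes "l \<le> n"
  shows "(\<Prod>r\<in>{1..n}. if l < r then x else 1) = x ^ (n - l)"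
proof -
  have "(\<Prod>r\<in>{1..n}. if l < r then x else 1) = (\<Prod>r\<in>{1..n} \<inter> {r. l < r}. x) * (\<Prod>r\<in>{1..n} \<inter> - {r. l < r}. 1)"
    by (rule prod.If_cases) simp
  also have "{1..n} \<inter> {r. l < r} = {Suc l..n}" by auto
  finally show ?thesis by simp
qed

lemma I1: "ile (\<Prod>s\<in>{1..m}. gpoly n \<beta> (\<alpha> s)) (Lmono m n (elem_sym m \<alpha>) (elem_sym n \<beta>))"
proof (induction m)
  case 0
  define k0 where "k0 = restrict (\<lambda>_. 0::nat) {1..n}"
  have "k0 \<in> Kmono 0 n" by (simp add: k0_def Kmono_def Kall_def PiE_iff)
  moreover have "termL 0 n (elem_sym 0 \<alpha>) (elem_sym n \<beta>) k0 = 1"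
    by (simp add: termL_def k0_def es_0)
  ultimately have "ile 1 (Lmono 0 n (elem_sym 0 \<alpha>) (elem_sym n \<beta>))"
    unfolding Lmono_def by (metis ile_sum_member fin_Kmono)
  then show ?case by simp
next
  case (Suc m)
  let ?a' = "elem_sym m \<alpha>" and ?a = "elem_sym (Suc m) \<alpha>" and ?b = "elem_sym n \<beta>" and ?x = "\<alpha> (Suc m)"
  have "(\<Prod>s\<in>{1..Suc m}. gpoly n \<beta> (\<alpha> s)) = (\<Prod>s\<in>{1..m}. gpoly n \<beta> (\<alpha> s)) * gpoly n \<beta> ?x"
    by (simp add: prod.cl_ivl_Suc)
  also have "ile \<dots> (Lmono m n ?a' ?b * gpoly n \<beta> ?x)"
    by (rule ile_multR[OF Suc.IH])
  also have "Lmono m n ?a' ?b * gpoly n \<beta> ?x = (\<Sum>k'\<in>Kmono m n. \<Sum>l\<in>{0..n}. termL m n ?a' ?b k' * (?x ^ (n - l) * ?b l))"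
    unfolding Lmono_def gpoly_def by (rule sum_product)
  also have "ile \<dots> (Lmono (Suc m) n ?a ?b)"
  proof (rule ile_sum_bound, rule ile_sum_bound)
    fix k' l assume k'K: "k' \<in> Kmono m n" and l: "l \<in> {0..n}"
    then have k'le: "\<And>r. r \<in> {1..n} \<Longrightarrow> k' r \<le> m"
      and k'mono: "\<And>r s. r \<in> {1..n} \<Longrightarrow> s \<in> {1..n} \<Longrightarrow> r \<le> s \<Longrightarrow> k' r \<le> k' s"
      by (auto simp: Kmono_def Kall_def PiE_iff)
    define k where "k = restrict (\<lambda>r. k' r + (if l < r then 1 else 0)) {1..n}"
    have kr: "\<And>r. r \<in> {1..n} \<Longrightarrow> k r = k' r + (if l < r then 1 else 0)" by (simp add: k_def)
    have kK: "k \<in> Kmono (Suc m) n"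
    proof -
      have "\<forall>r\<in>{1..n}. k r \<in> {0..Suc m}" using k'le kr by fastforce
      moreover have "\<forall>r\<in>{1..n}. \<forall>s\<in>{1..n}. r \<le> s \<longrightarrow> k r \<le> k s"
      proof (intro ballI impI)
        fix r s assume "r \<in> {1..n}" "s \<in> {1..n}" "r \<le> s"
        then show "k r \<le> k s" using k'mono[of r s] kr by auto
      qed
      ultimately show ?thesis by (simp add: Kmono_def Kall_def PiE_iff k_def)
    qed
    have apart: "ile (?x ^ (n - l) * (\<Prod>r\<in>{1..n}. ?a' (k' r))) (\<Prod>r\<in>{1..n}. ?a (k r))"
    proof -
      have "?x ^ (n - l) * (\<Prod>r\<in>{1..n}. ?a' (k' r)) = (\<Prod>r\<in>{1..n}. (if l < r then ?x else 1) * ?a' (k' r))"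
        using l prod_if_pow[of l n ?x] by (simp add: prod.distrib)
      also have "ile \<dots> (\<Prod>r\<in>{1..n}. ?a (k r))"
      proof (rule ile_prod_mono)
        fix r assume r: "r \<in> {1..n}"
        show "ile ((if l < r then ?x else 1) * ?a' (k' r)) (?a (k r))"
        proof (cases "l < r")
          case True
          then have "?a (k r) = ?a' (k' r + 1) + ?x * ?a' (k' r)" using kr[OF r] by (simp add: es_rec)
          then show ?thesis using True by (simp add: ile_addR)
        next
          case False
          then have "?a (k r) = ?a' (k' r) + (if 1 \<le> k' r then ?x * ?a' (k' r - 1) else 0)"
            using kr[OF r] by (simp add: es_rec)
          then show ?thesis using False by (simp add: ile_addL)
        qed
      qed
      finally show ?thesis .
    qed
    define \<kappa> where "\<kappa> = (if l = 0 then 0 else k' l)"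
    have F1: "\<And>r. r \<in> {1..n} \<Longrightarrow> r \<le> l \<Longrightarrow> k' r \<le> \<kappa>"
      using l k'mono by (auto simp: \<kappa>_def)
    have F2: "\<And>r. r \<in> {1..n} \<Longrightarrow> l < r \<Longrightarrow> \<kappa> \<le> k' r"
      using l k'mono by (auto simp: \<kappa>_def)
    have kap_le: "\<kappa> \<le> m" using l k'le by (auto simp: \<kappa>_def)
    have lc1: "\<And>i. i \<le> \<kappa> \<Longrightarrow> lc n k i = lc n k' i"
    proof -
      fix i assume i: "i \<le> \<kappa>"
      have "{r \<in> {1..n}. k r < i} = {r \<in> {1..n}. k' r < i}"
      proof (rule Collect_cong, rule conj_cong[OF refl])
        fix r assume r: "r \<in> {1..n}"
        show "k r < i \<longleftrightarrow> k' r < i"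
          using F2[OF r] kr[OF r] i by (cases "l < r") auto
      qed
      then show "lc n k i = lc n k' i" by (simp add: lc_def)
    qed
    have lc2: "lc n k (Suc \<kappa>) = l"
    proof -
      have "{r \<in> {1..n}. k r < Suc \<kappa>} = {1..l}"
      proof
        show "{r \<in> {1..n}. k r < Suc \<kappa>} \<subseteq> {1..l}"
        proof
          fix r assume "r \<in> {r \<in> {1..n}. k r < Suc \<kappa>}"
          then have r: "r \<in> {1..n}" "k r < Suc \<kappa>" by auto
          then have "\<not> l < r" using F2[OF r(1)] kr[OF r(1)] by auto
          then show "r \<in> {1..l}" using r by auto
        qed
      next
        show "{1..l} \<subseteq> {r \<in> {1..n}. k r < Suc \<kappa>}"
        proof
          fix r assume "r \<in> {1..l}"
          then have r: "r \<in> {1..n}" "r \<le> l" using l by auto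
          then show "r \<in> {r \<in> {1..n}. k r < Suc \<kappa>}" using F1[OF r] kr[OF r(1)] by auto
        qed
      qed
      then show ?thesis by (simp add: lc_def)
    qed
    have lc3: "\<And>i. Suc \<kappa> \<le> i \<Longrightarrow> lc n k (Suc i) = lc n k' i"
    proof -
      fix i assume i: "Suc \<kappa> \<le> i"
      have "{r \<in> {1..n}. k r < Suc i} = {r \<in> {1..n}. k' r < i}"
      proof (rule Collect_cong, rule conj_cong[OF refl])
        fix r assume r: "r \<in> {1..n}"
        show "k r < Suc i \<longleftrightarrow> k' r < i"
        proof (cases "l < r")
          case True then show ?thesis using kr[OF r] by simp
        next
          case False then show ?thesis using F1[OF r] kr[OF r] i by simp
        qed
      qed
      then show "lc n k (Suc i) = lc n k' i" by (simp add: lc_def)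
    qed
    have bpart: "(\<Prod>i\<in>{1..Suc m}. ?b (lc n k i)) = ?b l * (\<Prod>i\<in>{1..m}. ?b (lc n k' i))"
    proof -
      have "(\<Prod>i\<in>{1..Suc m}. ?b (lc n k i)) = (\<Prod>i\<in>{1..\<kappa>}. ?b (lc n k i)) * ?b (lc n k (Suc \<kappa>)) * (\<Prod>i\<in>{Suc \<kappa>..m}. ?b (lc n k (Suc i)))"
        by (rule prod_split3[OF kap_le])
      also have "(\<Prod>i\<in>{1..\<kappa>}. ?b (lc n k i)) = (\<Prod>i\<in>{1..\<kappa>}. ?b (lc n k' i))"
        by (rule prod.cong) (auto simp: lc1)
      also have "(\<Prod>i\<in>{Suc \<kappa>..m}. ?b (lc n k (Suc i))) = (\<Prod>i\<in>{Suc \<kappa>..m}. ?b (lc n k' i))"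
        by (rule prod.cong) (auto simp: lc3)
      also have "(\<Prod>i\<in>{1..m}. ?b (lc n k' i)) = (\<Prod>i\<in>{1..\<kappa>}. ?b (lc n k' i)) * (\<Prod>i\<in>{Suc \<kappa>..m}. ?b (lc n k' i))"
        by (rule prod_split2[OF kap_le])
      ultimately show ?thesis using lc2 by (simp add: mult_ac)
    qed
    have "termL m n ?a' ?b k' * (?x ^ (n - l) * ?b l)
        = (?x ^ (n - l) * (\<Prod>r\<in>{1..n}. ?a' (k' r))) * (\<Prod>i\<in>{1..Suc m}. ?b (lc n k i))"
      unfolding bpart termL_def by (simp add: mult_ac)
    also have "ile \<dots> ((\<Prod>r\<in>{1..n}. ?a (k r)) * (\<Prod>i\<in>{1..Suc m}. ?b (lc n k i)))"
      by (rule ile_multR[OF apart])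
    also have "\<dots> = termL (Suc m) n ?a ?b k" by (simp add: termL_def)
    also have "ile \<dots> (Lmono (Suc m) n ?a ?b)"
      unfolding Lmono_def by (rule ile_sum_member[OF fin_Kmono kK])
    finally show "ile (termL m n ?a' ?b k' * (?x ^ (n - l) * ?b l)) (Lmono (Suc m) n ?a ?b)" .
  qed
  finally show ?case .
qed



lemma Bineq:
  fixes k k' :: "nat \<Rightarrow> nat" and b :: "nat \<Rightarrow> 'a::comm_idem_semiring"
  assumes ctb: "ctransfer b"
    and TA: "T \<subseteq> {1..n}" and top: "\<forall>r\<in>T. \<forall>r'\<in>{1..n} - T. k r' \<le> k r"
    and kT: "\<forall>r\<in>T. 1 \<le> k r" and kle: "\<forall>r\<in>{1..n}. k r \<le> Suc m" and kout: "\<forall>r\<in>{1..n} - T. k r \<le> m"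
    and k'def: "\<forall>r\<in>{1..n}. k' r = (if r \<in> T then k r - 1 else k r)"
  shows "ile (\<Prod>i\<in>{1..Suc m}. b (lc n k i)) (b (n - card T) * (\<Prod>i\<in>{1..m}. b (lc n k' i)))"
proof -
  define u where "u = (\<lambda>i. card {r \<in> {1..n} - T. k r < i})"
  define v where "v = (\<lambda>i. card {r \<in> T. k r < i})"
  define c where "c = n - card T"
  have fT: "finite T" using TA finite_subset by auto
  have cardAT: "card ({1..n} - T) = c" using TA fT by (simp add: card_Diff_subset c_def)
  have lcUV: "\<And>i. lc n k i = u i + v i"
  proof -
    fix i
    have "{r \<in> {1..n}. k r < i} = {r \<in> {1..n} - T. k r < i} \<union> {r \<in> T. k r < i}" using TA by auto
    moreover have "card ({r \<in> {1..n} - T. k r < i} \<union> {r \<in> T. k r < i}) = u i + v i"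
      unfolding u_def v_def by (rule card_Un_disjoint) (use fT in auto)
    ultimately show "lc n k i = u i + v i" by (simp add: lc_def)
  qed
  have lc'UV: "\<And>i. lc n k' i = u i + v (Suc i)"
  proof -
    fix i
    have "{r \<in> {1..n}. k' r < i} = {r \<in> {1..n} - T. k r < i} \<union> {r \<in> T. k r < Suc i}"
    proof (rule set_eqI)
      fix r show "r \<in> {r \<in> {1..n}. k' r < i} \<longleftrightarrow> r \<in> {r \<in> {1..n} - T. k r < i} \<union> {r \<in> T. k r < Suc i}"
      proof (cases "r \<in> T")
        case True
        then have "r \<in> {1..n}" "k' r = k r - 1" "1 \<le> k r" using TA k'def kT by auto
        then show ?thesis using True by auto
      next
        case False
        then show ?thesis using k'def by auto
      qed
    qed
    moreover have "card ({r \<in> {1..n} - T. k r < i} \<union> {r \<in> T. k r < Suc i}) = u i + v (Suc i)"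
      unfolding u_def v_def by (rule card_Un_disjoint) (use fT in auto)
    ultimately show "lc n k' i = u i + v (Suc i)" by (simp add: lc_def)
  qed
  have ule: "\<And>i. u i \<le> c"
  proof -
    fix i
    have "u i \<le> card ({1..n} - T)" unfolding u_def by (rule card_mono) auto
    then show "u i \<le> c" using cardAT by simp
  qed
  show ?thesis
  proof (cases "T = {}")
    case True
    then have v0: "\<And>i. v i = 0" by (simp add: v_def)
    have "lc n k (Suc m) = n"
    proof -
      have "{r \<in> {1..n}. k r < Suc m} = {1..n}" using kout True by auto
      then show ?thesis by (simp add: lc_def)
    qed
    moreover have "\<And>i. lc n k' i = lc n k i" using lcUV lc'UV v0 by simp
    ultimately show ?thesis using True by (simp add: prod.cl_ivl_Suc mult.commute)
  next
    case False
    define \<theta> where "\<theta> = Min (k ` T)"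
    have "\<theta> \<in> k ` T" unfolding \<theta>_def using False fT by simp
    then obtain r0 where r0: "r0 \<in> T" "k r0 = \<theta>" by auto
    have thle: "\<And>r. r \<in> T \<Longrightarrow> \<theta> \<le> k r" unfolding \<theta>_def using fT by simp
    have outle: "\<And>r. r \<in> {1..n} - T \<Longrightarrow> k r \<le> \<theta>" using top r0 by auto
    have th1: "1 \<le> \<theta>" using kT r0 by auto
    have thSm: "\<theta> \<le> Suc m" using kle r0 TA by auto
    have vzero: "\<And>i. i \<le> \<theta> \<Longrightarrow> v i = 0"
    proof -
      fix i assume i: "i \<le> \<theta>"
      have "{r \<in> T. k r < i} = {}" using thle i by fastforce
      then show "v i = 0" unfolding v_def by (simp only: card.empty)
    qed
    have ufull: "\<And>i. \<theta> < i \<Longrightarrow> u i = c"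
    proof -
      fix i assume i: "\<theta> < i"
      have "{r \<in> {1..n} - T. k r < i} = {1..n} - T" using outle i by fastforce
      then show "u i = c" using cardAT unfolding u_def by (simp only:)
    qed
    show ?thesis
    proof (cases "\<theta> = Suc m")
      case True
      have "\<And>i. i \<le> m \<Longrightarrow> lc n k' i = lc n k i" using lcUV lc'UV vzero True by simp
      then have eqP: "(\<Prod>i\<in>{1..m}. b (lc n k i)) = (\<Prod>i\<in>{1..m}. b (lc n k' i))"
        by (intro prod.cong) auto
      have "lc n k (Suc m) = c"
      proof -
        have "{r \<in> {1..n} - T. k r < Suc m} = {1..n} - T" using kout by (auto simp: Ball_def less_Suc_eq_le)
        then have "u (Suc m) = c" using cardAT by (simp add: u_def)
        then show ?thesis using lcUV vzero True by simp
      qed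
      then show ?thesis using eqP by (simp add: prod.cl_ivl_Suc mult.commute c_def)
    next
      case False
      then have thm2: "\<theta> \<le> m" using thSm by simp
      define j where "j = \<theta> - 1"
      have thj: "\<theta> = Suc j" using th1 by (simp add: j_def)
      have jm: "j \<le> m" "Suc j \<le> m" using thm2 thj by auto
      define V where "V = v (Suc \<theta>)"
      define P1 where "P1 = (\<Prod>i\<in>{1..j}. b (lc n k' i))"
      define P3 where "P3 = (\<Prod>i\<in>{Suc \<theta>..m}. b (lc n k' i))"
      have e1: "(\<Prod>i\<in>{1..j}. b (lc n k i)) = P1"
        unfolding P1_def by (rule prod.cong) (use lcUV lc'UV vzero thj in auto)
      have e3: "(\<Prod>i\<in>{Suc \<theta>..m}. b (lc n k (Suc i))) = P3"
        unfolding P3_def by (rule prod.cong) (use lcUV lc'UV ufull in auto)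
      have ins: "\<And>f :: nat \<Rightarrow> 'a. (\<Prod>i\<in>{Suc j..m}. f i) = f \<theta> * (\<Prod>i\<in>{Suc \<theta>..m}. f i)"
      proof -
        fix f :: "nat \<Rightarrow> 'a"
        have "{Suc j..m} = insert \<theta> {Suc \<theta>..m}" using thj jm by auto
        then show "(\<Prod>i\<in>{Suc j..m}. f i) = f \<theta> * (\<Prod>i\<in>{Suc \<theta>..m}. f i)" by simp
      qed
      have LHS: "(\<Prod>i\<in>{1..Suc m}. b (lc n k i)) = (P1 * P3) * (b (u \<theta>) * b (c + V))"
      proof -
        have "(\<Prod>i\<in>{1..Suc m}. b (lc n k i)) = (\<Prod>i\<in>{1..j}. b (lc n k i)) * b (lc n k (Suc j)) * (\<Prod>i\<in>{Suc j..m}. b (lc n k (Suc i)))"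
          by (rule prod_split3[OF jm(1)])
        also have "\<dots> = P1 * b (lc n k \<theta>) * (b (lc n k (Suc \<theta>)) * P3)"
          unfolding e1 ins[of "\<lambda>i. b (lc n k (Suc i))"] e3 by (simp add: thj)
        also have "lc n k \<theta> = u \<theta>" using lcUV vzero by simp
        also have "lc n k (Suc \<theta>) = c + V" using lcUV ufull by (simp add: V_def)
        finally show ?thesis by (simp add: mult_ac)
      qed
      have RHS: "(\<Prod>i\<in>{1..m}. b (lc n k' i)) = P1 * (b (u \<theta> + V) * P3)"
      proof -
        have "(\<Prod>i\<in>{1..m}. b (lc n k' i)) = P1 * (\<Prod>i\<in>{Suc j..m}. b (lc n k' i))"
          unfolding P1_def by (rule prod_split2[OF jm(1)])
        also have "\<dots> = P1 * (b (lc n k' \<theta>) * P3)" unfolding ins P3_def ..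
        also have "lc n k' \<theta> = u \<theta> + V" using lc'UV by (simp add: V_def)
        finally show ?thesis .
      qed
      have pair: "ile (b (u \<theta>) * b (c + V)) (b (u \<theta> + V) * b c)"
      proof -
        have "ile (b (c + V) * b (u \<theta>)) (b (c + V - V) * b (u \<theta> + V))"
          by (rule ctr_ext[OF ctb]) (use ule[of \<theta>] in simp)
        then show ?thesis by (simp add: mult.commute)
      qed
      have "ile ((P1 * P3) * (b (u \<theta>) * b (c + V))) ((P1 * P3) * (b (u \<theta> + V) * b c))"
        using pair by (simp add: ile_mult)
      then show ?thesis unfolding LHS RHS c_def[symmetric] by (simp add: mult_ac)
    qed
  qed
qed



lemma I2: "ile (Lall m n (elem_sym m \<alpha>) (elem_sym n \<beta>)) (\<Prod>s\<in>{1..m}. gpoly n \<beta> (\<alpha> s))"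
proof (induction m)
  case 0
  have "ile (Lall 0 n (elem_sym 0 \<alpha>) (elem_sym n \<beta>)) 1"
    unfolding Lall_def
  proof (rule ile_sum_bound)
    fix k assume "k \<in> Kall 0 n"
    then have "\<And>r. r \<in> {1..n} \<Longrightarrow> k r = 0" by (auto simp: Kall_def PiE_iff)
    then have "termL 0 n (elem_sym 0 \<alpha>) (elem_sym n \<beta>) k = 1" by (simp add: termL_def es_0)
    then show "ile (termL 0 n (elem_sym 0 \<alpha>) (elem_sym n \<beta>) k) 1" by simp
  qed
  then show ?case by simp
next
  case (Suc m)
  let ?a' = "elem_sym m \<alpha>" and ?a = "elem_sym (Suc m) \<alpha>" and ?b = "elem_sym n \<beta>" and ?x = "\<alpha> (Suc m)"
  let ?R = "Lall m n ?a' ?b * gpoly n \<beta> ?x"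
  have key: "\<And>k' l. k' \<in> Kall m n \<Longrightarrow> l \<in> {0..n} \<Longrightarrow> ile (termL m n ?a' ?b k' * (?x ^ (n - l) * ?b l)) ?R"
  proof -
    fix k' l assume k': "k' \<in> Kall m n" and l: "l \<in> {0..n}"
    have "?R = (\<Sum>k'\<in>Kall m n. \<Sum>l\<in>{0..n}. termL m n ?a' ?b k' * (?x ^ (n - l) * ?b l))"
      unfolding Lall_def gpoly_def by (rule sum_product)
    moreover have "ile (termL m n ?a' ?b k' * (?x ^ (n - l) * ?b l)) (\<Sum>k'\<in>Kall m n. \<Sum>l\<in>{0..n}. termL m n ?a' ?b k' * (?x ^ (n - l) * ?b l))"
      by (rule ile_trans_member[OF fin_Kall k'], rule ile_sum_member) (use l in auto)
    ultimately show "ile (termL m n ?a' ?b k' * (?x ^ (n - l) * ?b l)) ?R" by simp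
  qed
  have main: "ile (Lall (Suc m) n ?a ?b) ?R"
    unfolding Lall_def[of "Suc m"]
  proof (rule ile_sum_bound)
    fix k assume kK: "k \<in> Kall (Suc m) n"
    then have kle: "\<forall>r\<in>{1..n}. k r \<le> Suc m" by (auto simp: Kall_def PiE_iff)
    define h0 where "h0 = (\<lambda>r. ?a' (k r))"
    define h1 where "h1 = (\<lambda>r. if 1 \<le> k r then ?x * ?a' (k r - 1) else 0)"
    define B where "B = (\<Prod>i\<in>{1..Suc m}. ?b (lc n k i))"
    have "(\<Prod>r\<in>{1..n}. ?a (k r)) = (\<Prod>r\<in>{1..n}. h1 r + h0 r)"
      by (rule prod.cong) (simp_all add: es_rec h0_def h1_def add.commute)
    also have "\<dots> = (\<Sum>W\<in>Pow {1..n}. PW h0 h1 {1..n} W)"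
      unfolding PW_def by (rule prod_add') simp
    finally have tL: "termL (Suc m) n ?a ?b k = (\<Sum>W\<in>Pow {1..n}. PW h0 h1 {1..n} W * B)"
      unfolding termL_def B_def by (simp add: sum_distrib_right)
    have "ile (\<Sum>W\<in>Pow {1..n}. PW h0 h1 {1..n} W * B) ?R"
    proof (rule ile_sum_bound)
      fix W assume W: "W \<in> Pow {1..n}"
      have "card W \<le> card {1..n}" using W by (intro card_mono) auto
      then obtain T where T: "T \<subseteq> {1..n}" "card T = card W" "\<forall>r\<in>T. \<forall>r'\<in>{1..n} - T. k r' \<le> k r"
        using top_set[of "{1..n}" "card W" k] by auto
      have ex: "\<And>r r'. r \<in> {1..n} \<Longrightarrow> r' \<in> {1..n} \<Longrightarrow> k r \<le> k r' \<Longrightarrow> ile (h1 r * h0 r') (h0 r * h1 r')"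
      proof -
        fix r r' assume rr: "r \<in> {1..n}" "r' \<in> {1..n}" "k r \<le> k r'"
        show "ile (h1 r * h0 r') (h0 r * h1 r')"
        proof (cases "k r = 0")
          case True then show ?thesis by (simp add: h1_def)
        next
          case False
          then have "1 \<le> k r" "1 \<le> k r'" using rr by auto
          have "k r - 1 < k r'" using rr False by simp
          then have "ile (?a' (k r') * ?a' (k r - 1)) (?a' (k r' - 1) * ?a' (k r - 1 + 1))"
            using es_transfer by blast
          then have "ile (?x * (?a' (k r') * ?a' (k r - 1))) (?x * (?a' (k r' - 1) * ?a' (k r - 1 + 1)))"
            by (simp add: ile_mult)
          then show ?thesis using \<open>1 \<le> k r\<close> \<open>1 \<le> k r'\<close> by (simp add: h0_def h1_def mult_ac)
        qed
      qed
      have "ile (PW h0 h1 {1..n} W) (PW h0 h1 {1..n} T)"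
        using exchange[of "{1..n}" k h1 h0 T W] ex T W by auto
      then have step1: "ile (PW h0 h1 {1..n} W * B) (PW h0 h1 {1..n} T * B)" by (rule ile_multR)
      have step2: "ile (PW h0 h1 {1..n} T * B) ?R"
      proof (cases "(\<exists>r\<in>T. k r = 0) \<or> (\<exists>r\<in>{1..n} - T. k r = Suc m)")
        case True
        have "PW h0 h1 {1..n} T = 0"
        proof (cases "\<exists>r\<in>T. k r = 0")
          case True
          then obtain r where "r \<in> T" "k r = 0" by auto
          then have "(\<Prod>r\<in>T. h1 r) = 0" using T(1) by (intro prod_zero') (auto simp: h1_def intro: finite_subset)
          then show ?thesis by (simp add: PW_def)
        next
          case False
          then obtain r where "r \<in> {1..n} - T" "k r = Suc m" using \<open>(\<exists>r\<in>T. k r = 0) \<or> _\<close> by auto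
          then have "(\<Prod>r\<in>{1..n} - T. h0 r) = 0" by (intro prod_zero') (auto simp: h0_def es_big)
          then show ?thesis by (simp add: PW_def)
        qed
        then show ?thesis by simp
      next
        case False
        then have kT: "\<forall>r\<in>T. 1 \<le> k r" by auto
        have kout: "\<forall>r\<in>{1..n} - T. k r \<le> m"
        proof
          fix r assume r: "r \<in> {1..n} - T"
          then have "k r \<le> Suc m" "k r \<noteq> Suc m" using kle False by auto
          then show "k r \<le> m" by simp
        qed
        define k' where "k' = restrict (\<lambda>r. if r \<in> T then k r - 1 else k r) {1..n}"
        have k'def: "\<forall>r\<in>{1..n}. k' r = (if r \<in> T then k r - 1 else k r)" by (simp add: k'_def)
        have k'K: "k' \<in> Kall m n"
        proof -
          have "\<forall>r\<in>{1..n}. k' r \<in> {0..m}"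
          proof
            fix r assume r: "r \<in> {1..n}"
            show "k' r \<in> {0..m}"
            proof (cases "r \<in> T")
              case True
              then have "k r \<le> Suc m" "k' r = k r - 1" using kle r k'def by auto
              then show ?thesis by simp
            next
              case False then show ?thesis using kout r k'def by auto
            qed
          qed
          then show ?thesis by (simp add: Kall_def PiE_iff k'_def)
        qed
        have fT: "finite T" using T(1) finite_subset by auto
        have cTn: "card T \<le> n" using T(1) card_mono[of "{1..n}" T] by simp
        have PWT: "PW h0 h1 {1..n} T = ?x ^ card T * (\<Prod>r\<in>{1..n}. ?a' (k' r))"
        proof -
          have "(\<Prod>r\<in>T. h1 r) = (\<Prod>r\<in>T. ?x * ?a' (k' r))"
            by (rule prod.cong) (use kT k'def T(1) in \<open>auto simp: h1_def\<close>)
          also have "\<dots> = ?x ^ card T * (\<Prod>r\<in>T. ?a' (k' r))" by (simp add: prod.distrib)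
          finally have p1: "(\<Prod>r\<in>T. h1 r) = ?x ^ card T * (\<Prod>r\<in>T. ?a' (k' r))" .
          have p2: "(\<Prod>r\<in>{1..n} - T. h0 r) = (\<Prod>r\<in>{1..n} - T. ?a' (k' r))"
            by (rule prod.cong) (use k'def in \<open>auto simp: h0_def\<close>)
          have p3: "(\<Prod>r\<in>{1..n}. ?a' (k' r)) = (\<Prod>r\<in>{1..n} - T. ?a' (k' r)) * (\<Prod>r\<in>T. ?a' (k' r))"
            by (rule prod.subset_diff[OF T(1)]) simp
          show ?thesis unfolding PW_def p1 p2 p3 by (simp add: mult_ac)
        qed
        have BI: "ile B (?b (n - card T) * (\<Prod>i\<in>{1..m}. ?b (lc n k' i)))"
          unfolding B_def by (rule Bineq[OF es_ctransfer T(1) T(3) kT kle kout k'def])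
        have "PW h0 h1 {1..n} T * B = (\<Prod>r\<in>{1..n}. ?a' (k' r)) * ?x ^ card T * B" unfolding PWT by (simp add: mult_ac)
        also have "ile \<dots> ((\<Prod>r\<in>{1..n}. ?a' (k' r)) * ?x ^ card T * (?b (n - card T) * (\<Prod>i\<in>{1..m}. ?b (lc n k' i))))"
          using BI by (simp add: ile_mult)
        also have "\<dots> = termL m n ?a' ?b k' * (?x ^ (n - (n - card T)) * ?b (n - card T))"
          using cTn by (simp add: termL_def mult_ac)
        also have "ile \<dots> ?R" by (rule key[OF k'K]) simp
        finally show ?thesis .
      qed
      show "ile (PW h0 h1 {1..n} W * B) ?R" using step1 step2 by (rule ile_trans)
    qed
    then show "ile (termL (Suc m) n ?a ?b k) ?R" using tL by simp
  qed
  have "ile ?R ((\<Prod>s\<in>{1..m}. gpoly n \<beta> (\<alpha> s)) * gpoly n \<beta> ?x)"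
    by (rule ile_multR[OF Suc.IH])
  also have "\<dots> = (\<Prod>s\<in>{1..Suc m}. gpoly n \<beta> (\<alpha> s))" by (simp add: prod.cl_ivl_Suc)
  finally show ?case using main ile_trans by blast
qed

theorem mainTheorem1:
  fixes m n :: nat and \<alpha> \<beta> :: "nat \<Rightarrow> 'a::comm_idem_semiring"
  assumes "m \<ge> 1" and "n \<ge> 1"
  shows "(\<Prod>i\<in>{1..m}. \<Prod>j\<in>{1..n}. \<alpha> i + \<beta> j)
         = per (m + n) (sylvester m n (elem_sym m \<alpha>) (elem_sym n \<beta>))"
proof -
  let ?a = "elem_sym m \<alpha>" and ?b = "elem_sym n \<beta>"
  have R: "(\<Prod>i\<in>{1..m}. \<Prod>j\<in>{1..n}. \<alpha> i + \<beta> j) = (\<Prod>s\<in>{1..m}. gpoly n \<beta> (\<alpha> s))"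
    unfolding gpoly_def by (rule prod.cong[OF refl], rule vieta)
  have "ile (\<Prod>s\<in>{1..m}. gpoly n \<beta> (\<alpha> s)) (per (m + n) (sylvester m n ?a ?b))"
    using I1 Lmono_le_per ile_trans by blast
  moreover have "ile (per (m + n) (sylvester m n ?a ?b)) (\<Prod>s\<in>{1..m}. gpoly n \<beta> (\<alpha> s))"
    using per_le_Lall[OF es_ctransfer es_ctransfer] I2 ile_trans by blast
  ultimately show ?thesis unfolding R by (rule ile_antisym)
qed


end
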